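(* Let $(E,(O_n)_{n\in\mathbb{N}},\ll)$ be an effective approximation space. Then, with all effective classes taken relative to the enumeration $(O_n)_{n\in\mathbb{N}}$, $F_\sigma(E)\cap G_\delta(E)\subseteq\bigcup_{\alpha<\omega_1^{CK}}\mathrm{D}_\alpha(E)\subseteq\Delta^0_2(E)$. In particular, if $F_\sigma(E)\cap G_\delta(E)=\Delta^0_2(E)$ then $\bigcup_{\alpha<\omega_1^{CK}}\mathrm{D}_\alpha(E)=\Delta^0_2(E)$.
   Context: Approximation relation: a binary relation $\ll$ on a topological basis $\mathcal{B}$ of $E$ such that for all $U,V,T\in\mathcal{B}$: (1) $U\ll V\Rightarrow V\subseteq U$; (2) $U\subseteq T$ and $U\ll V$ imply $T\ll V$; (3) for every $x\in U$ there is $W\in\mathcal{B}$ with $x\in W$, $U\ll W$; (4) every sequence $(U_i)$ in $\mathcal{B}$ with $U_i\ll U_{i+1}$ for all $i$ has $\bigcap_iU_i\neq\emptyset$. An effective approximation space is a triple $(E,(O_n)_{n},\ll)$ where $(O_n)_{n\in\mathbb{N}}$ enumerates (not necessarily injectively) a topological basis $\mathcal{B}$ of $E$, $\ll$ is an approximation relation on $\mathcal{B}$, and $\{(i,j):O_i\ll O_j\}$ is computably enumerable. Effective classes relative to $(O_n)$: a sequence $(X_n)_{n}$ of subsets of $E$ is uniformly $\Sigma^0_1$ if there is a c.e. $W\subseteq\mathbb{N}^2$ with $X_n=\bigcup_{i:(n,i)\in W}O_i$. $G_\delta(E)$: sets $\bigcap_nX_n$ with $(X_n)$ uniformly $\Sigma^0_1$;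 $F_\sigma(E)$: complements of $G_\delta(E)$ sets. $\Sigma^0_2(E)$: sets $\bigcup_n(X_n\setminus Y_n)$ with $(X_n),(Y_n)$ uniformly $\Sigma^0_1$; $\Pi^0_2(E)$: complements; $\Delta^0_2(E)=\Sigma^0_2(E)\cap\Pi^0_2(E)$. $\omega_1^{CK}$: the least non-computable ordinal. Parity: ordinal $\lambda+n$ ($\lambda$ zero or limit, $n<\omega$) has the parity of $n$; $\beta\sim\alpha$ means same parity. For $1\le\alpha<\omega_1^{CK}$, $\mathrm{D}_\alpha(E)$ is the class of sets $X$ for which there are a computable well-order $\preceq$ of order type $\alpha$ on $\mathbb{N}$ or on a finite initial segment $N$ of $\mathbb{N}$, with isomorphism $\varphi$ onto $\alpha$ such that $\{n:\varphi(n)\not\sim\alpha\}$ is computable, and a uniformly $\Sigma^0_1$ sequence $(X_n)_{n\in N}$ with $X=\bigcup_{p:\varphi(p)\not\sim\alpha}\big(X_p\setminus\bigcup_{q:\varphi(q)<\varphi(p)}X_q\big)$. *)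

theory Defs
  imports "HOL-Analysis.Analysis" "HOL-Library.Nat_Bijection"
begin

text \<open>Values on lists of other lengths are irrelevant.\<close>

inductive recfn :: "nat \<Rightarrow> (nat list \<Rightarrow> nat) \<Rightarrow> bool" where
  rf_zero: "recfn n (\<lambda>_. 0)"
| rf_succ: "recfn 1 (\<lambda>xs. Suc (hd xs))"
| rf_proj: "k < n \<Longrightarrow> recfn n (\<lambda>xs. xs ! k)"
| rf_comp: "recfn m f \<Longrightarrow> length gs = m \<Longrightarrow> (\<forall>g\<in>set gs. recfn n g) \<Longrightarrow>
            recfn n (\<lambda>xs. f (map (\<lambda>g. g xs) gs))"
| rf_prim: "recfn n f \<Longrightarrow> recfn (Suc (Suc n)) g \<Longrightarrow>
            recfn (Suc n) (\<lambda>xs. rec_nat (f (tl xs)) (\<lambda>y r. g (y # r # tl xs)) (hd xs))"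
| rf_mu: "recfn (Suc n) g \<Longrightarrow> (\<forall>xs. length xs = n \<longrightarrow> (\<exists>y. g (y # xs) = 0)) \<Longrightarrow>
          recfn n (\<lambda>xs. LEAST y. g (y # xs) = 0)"

definition computable_set :: "nat set \<Rightarrow> bool" where
  "computable_set A \<longleftrightarrow> (\<exists>f. recfn 1 f \<and> (\<forall>x. f [x] = (if x \<in> A then 1 else 0)))"

definition ce_set :: "nat set \<Rightarrow> bool" where
  "ce_set A \<longleftrightarrow> A = {} \<or> (\<exists>f. recfn 1 f \<and> A = range (\<lambda>x. f [x]))"

definition ce_rel :: "(nat \<times> nat) set \<Rightarrow> bool" where
  "ce_rel W \<longleftrightarrow> ce_set (prod_encode ` W)"

definition computable_rel :: "(nat \<times> nat) set \<Rightarrow> bool" where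
  "computable_rel W \<longleftrightarrow> computable_set (prod_encode ` W)"

definition approximation_relation ::
  "'a::topological_space set set \<Rightarrow> ('a set \<Rightarrow> 'a set \<Rightarrow> bool) \<Rightarrow> bool" where
  "approximation_relation B ll \<longleftrightarrow>
     (\<forall>U\<in>B. \<forall>V\<in>B. ll U V \<longrightarrow> V \<subseteq> U) \<and>
     (\<forall>U\<in>B. \<forall>V\<in>B. \<forall>T\<in>B. U \<subseteq> T \<and> ll U V \<longrightarrow> ll T V) \<and>
     (\<forall>U\<in>B. \<forall>x\<in>U. \<exists>W\<in>B. x \<in> W \<and> ll U W) \<and>
     (\<forall>S::nat \<Rightarrow> 'a set. (\<forall>i. S i \<in> B) \<and> (\<forall>i. ll (S i) (S (Suc i))) \<longrightarrow> (\<Inter>i. S i) \<noteq> {})"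

text \<open>The space E is the whole type 'a.\<close>
definition effective_approximation_space ::
  "(nat \<Rightarrow> 'a::topological_space set) \<Rightarrow> ('a set \<Rightarrow> 'a set \<Rightarrow> bool) \<Rightarrow> bool" where
  "effective_approximation_space Ob ll \<longleftrightarrow>
     topological_basis (range Ob) \<and>
     approximation_relation (range Ob) ll \<and>
     ce_rel {(i, j). ll (Ob i) (Ob j)}"

definition unif_Sigma01 :: "(nat \<Rightarrow> 'a set) \<Rightarrow> (nat \<Rightarrow> 'a set) \<Rightarrow> bool" where
  "unif_Sigma01 Ob X \<longleftrightarrow> (\<exists>W. ce_rel W \<and> (\<forall>n. X n = (\<Union>i\<in>{i. (n, i) \<in> W}. Ob i)))"

definition Gdelta :: "(nat \<Rightarrow> 'a set) \<Rightarrow> 'a set set" where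
  "Gdelta Ob = {A. \<exists>X. unif_Sigma01 Ob X \<and> A = (\<Inter>n. X n)}"

definition Fsigma :: "(nat \<Rightarrow> 'a set) \<Rightarrow> 'a set set" where
  "Fsigma Ob = {A. - A \<in> Gdelta Ob}"

definition Sigma02 :: "(nat \<Rightarrow> 'a set) \<Rightarrow> 'a set set" where
  "Sigma02 Ob = {A. \<exists>X Y. unif_Sigma01 Ob X \<and> unif_Sigma01 Ob Y \<and> A = (\<Union>n. X n - Y n)}"

definition Pi02 :: "(nat \<Rightarrow> 'a set) \<Rightarrow> 'a set set" where
  "Pi02 Ob = {A. - A \<in> Sigma02 Ob}"

definition Delta02 :: "(nat \<Rightarrow> 'a set) \<Rightarrow> 'a set set" where
  "Delta02 Ob = Sigma02 Ob \<inter> Pi02 Ob"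

text \<open>Ordinals are represented by well-order relations (Main's BNF_Wellorder
  library); an element a of the well-order alpha stands for the ordinal of its
  strict initial segment.  Writing that ordinal as lambda + n (lambda zero or limit),
  n is the number of elements b \<le> a with [b,a] finite, minus one.\<close>
definition elem_finpart :: "'b rel \<Rightarrow> 'b \<Rightarrow> nat" where
  "elem_finpart r a = card {b. (b, a) \<in> r \<and> finite {x. (b, x) \<in> r \<and> (x, a) \<in> r}} - 1"

text \<open>Writing the order type of r as lambda + m (lambda zero or limit),
  m is the number of elements of Field r with a finite upper set.\<close>
definition type_finpart :: "'b rel \<Rightarrow> nat" where
  "type_finpart r = card {b \<in> Field r. finite {x. (b, x) \<in> r}}"

definition parity_differs :: "'b rel \<Rightarrow> 'b \<Rightarrow> bool" where
  "parity_differs alpha a \<longleftrightarrow> (even (elem_finpart alpha a) \<noteq> even (type_finpart alpha))"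

text \<open>alpha < omega_1^CK: alpha is the order type of a computable well-order
  on a subset of the naturals.\<close>
definition computable_ordinal :: "'b rel \<Rightarrow> bool" where
  "computable_ordinal alpha \<longleftrightarrow> Well_order alpha \<and>
     (\<exists>r :: nat rel. Well_order r \<and> computable_rel r \<and> (r, alpha) \<in> ordIso)"

definition Dalpha :: "(nat \<Rightarrow> 'a set) \<Rightarrow> 'b rel \<Rightarrow> 'a set set" where
  "Dalpha Ob alpha = {A. \<exists>(r :: nat rel) N phi X.
      (N = UNIV \<or> (\<exists>k. N = {..<k})) \<and>
      Well_order r \<and> Field r = N \<and> computable_rel r \<and>
      iso r alpha phi \<and>
      computable_set {n \<in> N. parity_differs alpha (phi n)} \<and>
      unif_Sigma01 Ob X \<and>
      A = (\<Union>p\<in>{p \<in> N. parity_differs alpha (phi p)}.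
             X p - (\<Union>q\<in>{q \<in> N. (phi q, phi p) \<in> alpha \<and> phi q \<noteq> phi p}. X q))}"

text \<open>The union of D_alpha over 1 \<le> alpha < omega_1^CK (ordinals represented by
  well-orders on the naturals, which suffices as all such ordinals are countable).\<close>
definition Dunion :: "(nat \<Rightarrow> 'a set) \<Rightarrow> 'a set set" where
  "Dunion Ob = (\<Union>alpha\<in>{alpha :: nat rel. computable_ordinal alpha \<and> Field alpha \<noteq> {}}.
                 Dalpha Ob alpha)"

end

theory Submission
  imports Defs
begin


definition rc :: "nat \<Rightarrow> (nat list \<Rightarrow> nat) \<Rightarrow> bool" where
  "rc n f \<longleftrightarrow> (\<exists>g. recfn n g \<and> (\<forall>xs. length xs = n \<longrightarrow> g xs = f xs))"

lemma rc_cong: "rc n f \<Longrightarrow> (\<And>xs. length xs = n \<Longrightarrow> f xs = g xs) \<Longrightarrow> rc n g"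
  unfolding rc_def by metis

lemma rc_recfn: "recfn n f \<Longrightarrow> rc n f"
  unfolding rc_def by blast

lemma rc_zero: "rc n (\<lambda>_. 0)"
  by (rule rc_recfn) (rule rf_zero)

lemma rc_proj: "k < n \<Longrightarrow> rc n (\<lambda>xs. xs ! k)"
  by (rule rc_recfn) (rule rf_proj)

lemma rc_comp:
  assumes F: "rc m F" and len: "length gs = m" and gs: "\<forall>g\<in>set gs. rc n g"
  shows "rc n (\<lambda>xs. F (map (\<lambda>g. g xs) gs))"
proof -
  obtain F' where F': "recfn m F'" "\<forall>xs. length xs = m \<longrightarrow> F' xs = F xs"
    using F unfolding rc_def by blast
  have "\<forall>g\<in>set gs. \<exists>g'. recfn n g' \<and> (\<forall>xs. length xs = n \<longrightarrow> g' xs = g xs)"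
    using gs unfolding rc_def by blast
  then obtain G where G: "\<forall>g\<in>set gs. recfn n (G g) \<and> (\<forall>xs. length xs = n \<longrightarrow> G g xs = g xs)"
    by metis
  have "recfn n (\<lambda>xs. F' (map (\<lambda>g. g xs) (map G gs)))"
    by (rule rf_comp[OF F'(1)]) (use len G in auto)
  moreover have "\<forall>xs. length xs = n \<longrightarrow> F' (map (\<lambda>g. g xs) (map G gs)) = F (map (\<lambda>g. g xs) gs)"
  proof (intro allI impI)
    fix xs :: "nat list" assume l: "length xs = n"
    have mm: "map (\<lambda>g. g xs) (map G gs) = map (\<lambda>g. g xs) gs"
      unfolding map_map by (rule map_cong) (use G l in auto)
    then show "F' (map (\<lambda>g. g xs) (map G gs)) = F (map (\<lambda>g. g xs) gs)"
      using F'(2) len mm by (simp del: map_map)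
  qed
  ultimately show ?thesis unfolding rc_def by blast
qed

lemma rc_comp_list:
  assumes F: "rc m F" and G: "\<And>k. k < m \<Longrightarrow> rc n (G k)"
  shows "rc n (\<lambda>xs. F (map (\<lambda>k. G k xs) [0..<m]))"
proof -
  have "rc n (\<lambda>xs. F (map (\<lambda>g. g xs) (map G [0..<m])))"
    by (rule rc_comp[OF F]) (use G in auto)
  then show ?thesis by (simp add: comp_def)
qed

lemma rc_succ: "rc n f \<Longrightarrow> rc n (\<lambda>xs. Suc (f xs))"
proof -
  assume f: "rc n f"
  have s: "rc 1 (\<lambda>xs. Suc (hd xs))" by (rule rc_recfn) (rule rf_succ)
  have "rc n (\<lambda>xs. Suc (hd (map (\<lambda>g. g xs) [f])))"
    by (rule rc_comp[OF s]) (use f in auto)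
  then show ?thesis by simp
qed

lemma rc_const: "rc n (\<lambda>_. c)"
  by (induction c) (auto intro: rc_zero rc_succ)

lemma rc_prim:
  assumes f: "rc n f" and g: "rc (Suc (Suc n)) g"
  shows "rc (Suc n) (\<lambda>xs. rec_nat (f (tl xs)) (\<lambda>y r. g (y # r # tl xs)) (hd xs))"
proof -
  obtain f' where f': "recfn n f'" "\<forall>xs. length xs = n \<longrightarrow> f' xs = f xs"
    using f unfolding rc_def by blast
  obtain g' where g': "recfn (Suc (Suc n)) g'" "\<forall>xs. length xs = Suc (Suc n) \<longrightarrow> g' xs = g xs"
    using g unfolding rc_def by blast
  have "recfn (Suc n) (\<lambda>xs. rec_nat (f' (tl xs)) (\<lambda>y r. g' (y # r # tl xs)) (hd xs))"
    by (rule rf_prim[OF f'(1) g'(1)])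
  moreover have "rec_nat (f' (tl xs)) (\<lambda>y r. g' (y # r # tl xs)) k
        = rec_nat (f (tl xs)) (\<lambda>y r. g (y # r # tl xs)) k" if "length xs = Suc n" for xs k
    using that f'(2) g'(2) by (induction k) auto
  ultimately show ?thesis unfolding rc_def by blast
qed

lemma rc_comp_cons:
  assumes H: "rc (Suc n) H" and b: "rc n b"
  shows "rc n (\<lambda>xs. H (b xs # xs))"
proof -
  have "rc n (\<lambda>xs. H (map (\<lambda>k. (\<lambda>k xs. if k = 0 then b xs else xs ! (k - 1)) k xs) [0..<Suc n]))"
    by (rule rc_comp_list[OF H]) (case_tac "k = 0", simp add: b, simp, rule rc_proj, simp)
  then show ?thesis
  proof (rule rc_cong)
    fix xs :: "nat list" assume "length xs = n"
    then have "map (\<lambda>k. if k = 0 then b xs else xs ! (k - 1)) [0..<Suc n] = b xs # xs"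
      by (simp add: map_upt_Suc del: upt_Suc) (metis map_nth)
    then show "H (map (\<lambda>k. (\<lambda>k xs. if k = 0 then b xs else xs ! (k - 1)) k xs) [0..<Suc n]) = H (b xs # xs)"
      by simp
  qed
qed

lemma rc_rec:
  assumes a: "rc n a" and s: "rc (Suc (Suc n)) s" and b: "rc n b"
  shows "rc n (\<lambda>xs. rec_nat (a xs) (\<lambda>y r. s (y # r # xs)) (b xs))"
proof -
  have "rc n (\<lambda>xs. (\<lambda>ys. rec_nat (a (tl ys)) (\<lambda>y r. s (y # r # tl ys)) (hd ys)) (b xs # xs))"
    by (rule rc_comp_cons[OF rc_prim[OF a s] b])
  then show ?thesis by simp
qed

lemma rc_lift:
  assumes f: "rc n f"
  shows "rc (m + n) (\<lambda>xs. f (drop m xs))"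
proof -
  have "rc (m + n) (\<lambda>xs. f (map (\<lambda>k. (\<lambda>k xs. xs ! (m + k)) k xs) [0..<n]))"
    by (rule rc_comp_list[OF f]) (auto intro: rc_proj)
  then show ?thesis
  proof (rule rc_cong)
    fix xs :: "nat list" assume "length xs = m + n"
    then have "map (\<lambda>k. xs ! (m + k)) [0..<n] = drop m xs"
      by (intro nth_equalityI) auto
    then show "f (map (\<lambda>k. (\<lambda>k xs. xs ! (m + k)) k xs) [0..<n]) = f (drop m xs)" by simp
  qed
qed

lemma rc_lift2: "rc n f \<Longrightarrow> rc (Suc (Suc n)) (\<lambda>xs. f (drop 2 xs))"
  using rc_lift[of n f 2] by simp

lemma rec_nat_Suc_add: "rec_nat a (\<lambda>y r. Suc r) k = k + a"
  by (induction k) auto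

lemma rc_add: "rc n f \<Longrightarrow> rc n g \<Longrightarrow> rc n (\<lambda>xs. f xs + g xs)"
proof -
  assume f: "rc n f" and g: "rc n g"
  have "rc n (\<lambda>xs. rec_nat (g xs) (\<lambda>y r. (\<lambda>zs. Suc (zs ! 1)) (y # r # xs)) (f xs))"
    by (rule rc_rec[OF g _ f]) (auto intro: rc_succ rc_proj)
  then show ?thesis by (rule rc_cong) (simp add: rec_nat_Suc_add)
qed

lemma rc_comp1:
  assumes F: "rc 1 F" and a: "rc n a"
  shows "rc n (\<lambda>xs. F [a xs])"
proof -
  have "rc n (\<lambda>xs. F (map (\<lambda>g. g xs) [a]))"
    by (rule rc_comp[OF F]) (use a in auto)
  then show ?thesis by simp
qed

lemma rc_comp2:
  assumes F: "rc 2 F" and a: "rc n a" and b: "rc n b"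
  shows "rc n (\<lambda>xs. F [a xs, b xs])"
proof -
  have "rc n (\<lambda>xs. F (map (\<lambda>g. g xs) [a, b]))"
    by (rule rc_comp[OF F]) (use a b in auto)
  then show ?thesis by simp
qed

lemma rc_comp3:
  assumes F: "rc 3 F" and a: "rc n a" and b: "rc n b" and c: "rc n c"
  shows "rc n (\<lambda>xs. F [a xs, b xs, c xs])"
proof -
  have "rc n (\<lambda>xs. F (map (\<lambda>g. g xs) [a, b, c]))"
    by (rule rc_comp[OF F]) (use a b c in auto)
  then show ?thesis by simp
qed

lemma rc_unary:
  assumes "rc 1 (\<lambda>xs. h (xs ! 0))" and "rc n a"
  shows "rc n (\<lambda>xs. h (a xs))"
  using rc_comp1[OF assms] by simp

lemma rc_binary:
  assumes "rc 2 (\<lambda>xs. h (xs ! 0) (xs ! 1))" and "rc n a" and "rc n b"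
  shows "rc n (\<lambda>xs. h (a xs) (b xs))"
  using rc_comp2[OF assms] by simp

lemma rc_pred: "rc n f \<Longrightarrow> rc n (\<lambda>xs. f xs - 1)"
proof -
  assume f: "rc n f"
  have "rc n (\<lambda>xs. rec_nat 0 (\<lambda>y r. (\<lambda>zs. zs ! 0) (y # r # xs)) (f xs))"
    by (rule rc_rec[OF rc_const _ f]) (auto intro: rc_proj)
  moreover have "rec_nat 0 (\<lambda>y r. y) k = k - 1" for k by (cases k) auto
  ultimately show ?thesis by (auto elim: rc_cong)
qed

lemma rec_nat_pred: "rec_nat a (\<lambda>y r. r - Suc 0) k = a - k"
  by (induction k) auto

lemma rc_sub: "rc n f \<Longrightarrow> rc n g \<Longrightarrow> rc n (\<lambda>xs. f xs - g xs)"
proof -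
  assume f: "rc n f" and g: "rc n g"
  have "rc n (\<lambda>xs. rec_nat (f xs) (\<lambda>y r. (\<lambda>zs. zs ! 1 - 1) (y # r # xs)) (g xs))"
    by (rule rc_rec[OF f _ g]) (intro rc_proj rc_pred; simp)
  then show ?thesis by (rule rc_cong) (simp add: rec_nat_pred)
qed

lemma rec_nat_mult: "rec_nat 0 (\<lambda>y r. r + c) k = k * c"
  by (induction k) auto

lemma rc_mult: "rc n f \<Longrightarrow> rc n g \<Longrightarrow> rc n (\<lambda>xs. f xs * g xs)"
proof -
  assume f: "rc n f" and g: "rc n g"
  have "rc n (\<lambda>xs. rec_nat 0 (\<lambda>y r. (\<lambda>zs. zs ! 1 + g (drop 2 zs)) (y # r # xs)) (f xs))"
    by (rule rc_rec[OF rc_const _ f]) (intro rc_proj rc_add rc_lift2 g; simp)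
  then show ?thesis by (rule rc_cong) (simp add: rec_nat_mult)
qed

lemma rec_nat_if0: "rec_nat a (\<lambda>y r. b) k = (if k = 0 then a else b)"
  by (cases k) auto

lemma rc_if0: "rc n c \<Longrightarrow> rc n a \<Longrightarrow> rc n b \<Longrightarrow> rc n (\<lambda>xs. if c xs = 0 then a xs else b xs)"
proof -
  assume c: "rc n c" and a: "rc n a" and b: "rc n b"
  have "rc n (\<lambda>xs. rec_nat (a xs) (\<lambda>y r. (\<lambda>zs. b (drop 2 zs)) (y # r # xs)) (c xs))"
    by (rule rc_rec[OF a _ c]) (auto intro: rc_lift2 b)
  then show ?thesis by (rule rc_cong) (simp add: rec_nat_if0)
qed

lemma rc_shift0: "rc (Suc n) Q \<Longrightarrow> rc (Suc (Suc n)) (\<lambda>zs. Q (zs ! 0 # drop 2 zs))"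
proof -
  assume Q: "rc (Suc n) Q"
  have "rc (Suc (Suc n)) (\<lambda>zs. Q (map (\<lambda>k. (\<lambda>k zs. if k = 0 then zs ! 0 else zs ! Suc k) k zs) [0..<Suc n]))"
    by (rule rc_comp_list[OF Q]) (case_tac "k = 0", simp, rule rc_proj, simp, simp, rule rc_proj, simp)
  then show ?thesis
  proof (rule rc_cong)
    fix zs :: "nat list" assume l: "length zs = Suc (Suc n)"
    have "map (\<lambda>k. if k = 0 then zs ! 0 else zs ! Suc k) [0..<Suc n] = zs ! 0 # drop 2 zs"
      using l by (intro nth_equalityI) (auto simp: nth_Cons' simp del: upt_Suc)
    then show "Q (map (\<lambda>k. (\<lambda>k zs. if k = 0 then zs ! 0 else zs ! Suc k) k zs) [0..<Suc n]) = Q (zs ! 0 # drop 2 zs)"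
      by simp
  qed
qed

lemma rec_nat_sum: "rec_nat 0 (\<lambda>y r. r + f y) k = (\<Sum>i<k. f i)"
  by (induction k) auto

lemma rc_sum: "rc (Suc n) Q \<Longrightarrow> rc n b \<Longrightarrow> rc n (\<lambda>xs. \<Sum>i<b xs. Q (i # xs))"
proof -
  assume Q: "rc (Suc n) Q" and b: "rc n b"
  have "rc n (\<lambda>xs. rec_nat 0 (\<lambda>y r. (\<lambda>zs. zs ! 1 + Q (zs ! 0 # drop 2 zs)) (y # r # xs)) (b xs))"
    by (rule rc_rec[OF rc_const _ b]) (intro rc_add rc_proj rc_shift0 Q; simp)
  then show ?thesis by (rule rc_cong) (simp add: rec_nat_sum)
qed

definition dec :: "nat \<Rightarrow> (nat list \<Rightarrow> bool) \<Rightarrow> bool" where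
  "dec n P \<longleftrightarrow> rc n (\<lambda>xs. if P xs then 1 else 0)"

lemma dec_cong: "dec n P \<Longrightarrow> (\<And>xs. length xs = n \<Longrightarrow> P xs = Q xs) \<Longrightarrow> dec n Q"
  unfolding dec_def by (erule rc_cong) simp

lemma rc_if: "dec n P \<Longrightarrow> rc n a \<Longrightarrow> rc n b \<Longrightarrow> rc n (\<lambda>xs. if P xs then a xs else b xs)"
  unfolding dec_def by (drule rc_if0[of n _ b a]) (auto elim: rc_cong)

lemma dec_eq: "rc n f \<Longrightarrow> rc n g \<Longrightarrow> dec n (\<lambda>xs. f xs = g xs)"
  unfolding dec_def
  by (rule rc_cong[of n "\<lambda>xs. 1 - ((f xs - g xs) + (g xs - f xs))"]) (auto intro!: rc_sub rc_add rc_const)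

lemma dec_less: "rc n f \<Longrightarrow> rc n g \<Longrightarrow> dec n (\<lambda>xs. f xs < g xs)"
  unfolding dec_def
  by (rule rc_cong[of n "\<lambda>xs. 1 - (1 - (g xs - f xs))"]) (auto intro!: rc_sub rc_const)

lemma dec_not: "dec n P \<Longrightarrow> dec n (\<lambda>xs. \<not> P xs)"
  unfolding dec_def
  by (rule rc_cong[of n "\<lambda>xs. 1 - (if P xs then 1 else 0)"]) (auto intro!: rc_sub rc_const)

lemma dec_le: "rc n f \<Longrightarrow> rc n g \<Longrightarrow> dec n (\<lambda>xs. f xs \<le> g xs)"
  by (rule dec_cong[OF dec_not[OF dec_less[of n g f]]]) auto

lemma dec_conj: "dec n P \<Longrightarrow> dec n Q \<Longrightarrow> dec n (\<lambda>xs. P xs \<and> Q xs)"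
  unfolding dec_def
  by (rule rc_cong[of n "\<lambda>xs. (if P xs then 1 else 0) * (if Q xs then 1 else 0)"]) (auto intro!: rc_mult)

lemma dec_disj: "dec n P \<Longrightarrow> dec n Q \<Longrightarrow> dec n (\<lambda>xs. P xs \<or> Q xs)"
  by (rule dec_cong[OF dec_not[OF dec_conj[OF dec_not dec_not]]]) auto

lemma dec_imp: "dec n P \<Longrightarrow> dec n Q \<Longrightarrow> dec n (\<lambda>xs. P xs \<longrightarrow> Q xs)"
  by (rule dec_cong[OF dec_disj[OF dec_not]]) auto

lemma dec_iff: "dec n P \<Longrightarrow> dec n Q \<Longrightarrow> dec n (\<lambda>xs. P xs \<longleftrightarrow> Q xs)"
  by (rule dec_cong[OF dec_conj[OF dec_imp[of n P Q] dec_imp[of n Q P]]]) auto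

lemma dec_const: "dec n (\<lambda>xs. c)"
  unfolding dec_def by (cases c) (auto intro: rc_const)

lemma rc_dec: "dec n P \<Longrightarrow> rc n (\<lambda>xs. if P xs then 1 else 0)"
  unfolding dec_def .

lemma dec_ball: "dec (Suc n) Q \<Longrightarrow> rc n b \<Longrightarrow> dec n (\<lambda>xs. \<forall>i<b xs. Q (i # xs))"
proof -
  assume Q: "dec (Suc n) Q" and b: "rc n b"
  have "rc (Suc n) (\<lambda>ys. 1 - (if Q ys then 1 else 0))"
    using Q unfolding dec_def by (auto intro!: rc_sub rc_const)
  from rc_sum[OF this b] have S: "rc n (\<lambda>xs. \<Sum>i<b xs. 1 - (if Q (i # xs) then 1 else 0))" .
  have "dec n (\<lambda>xs. (\<Sum>i<b xs. 1 - (if Q (i # xs) then 1 else 0)) = (0::nat))"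
    using dec_eq[OF S rc_const[of n 0]] by (simp only:)
  then show ?thesis by (rule dec_cong) auto
qed

lemma dec_bex: "dec (Suc n) Q \<Longrightarrow> rc n b \<Longrightarrow> dec n (\<lambda>xs. \<exists>i<b xs. Q (i # xs))"
  by (rule dec_cong[OF dec_not[OF dec_ball[OF dec_not]]]) auto

lemma rec_nat_tri: "rec_nat 0 (\<lambda>y r. Suc (r + y)) k = triangle k"
  by (induction k) auto

lemma rc_triangle: "rc n f \<Longrightarrow> rc n (\<lambda>xs. triangle (f xs))"
proof -
  assume f: "rc n f"
  have "rc n (\<lambda>xs. rec_nat 0 (\<lambda>y r. (\<lambda>zs. zs ! 1 + Suc (zs ! 0)) (y # r # xs)) (f xs))"
    by (rule rc_rec[OF rc_const _ f]) (intro rc_add rc_succ rc_proj; simp)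
  then show ?thesis by (rule rc_cong) (simp add: rec_nat_tri)
qed

lemma rc_pe: "rc n f \<Longrightarrow> rc n g \<Longrightarrow> rc n (\<lambda>xs. prod_encode (f xs, g xs))"
  unfolding prod_encode_def by (auto intro!: rc_add rc_triangle)

lemma decode_sum:
  "(\<Sum>a<Suc x. \<Sum>b<Suc x. if prod_encode (a, b) = x then h a b else 0) = (case prod_decode x of (a, b) \<Rightarrow> h a b)"
proof -
  obtain a0 b0 where d: "prod_decode x = (a0, b0)" by fastforce
  then have x: "x = prod_encode (a0, b0)" by (metis prod_decode_inverse)
  have a0: "a0 < Suc x" and b0: "b0 < Suc x" using x le_prod_encode_1 le_prod_encode_2 by (auto simp: less_Suc_eq_le)
  have "(\<Sum>a<Suc x. \<Sum>b<Suc x. if prod_encode (a, b) = x then h a b else 0)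
       = (\<Sum>a<Suc x. \<Sum>b<Suc x. if a = a0 then (if b = b0 then h a b else 0) else 0)"
    by (intro sum.cong refl) (auto simp: x)
  also have "\<dots> = (\<Sum>a<Suc x. if a = a0 then h a b0 else 0)"
    by (intro sum.cong refl) (use b0 in auto)
  also have "\<dots> = h a0 b0" using a0 by simp
  finally show ?thesis by (simp add: d)
qed

lemma rc_decode_gen:
  assumes h: "rc 3 (\<lambda>zs. h (zs ! 1) (zs ! 0))"
  shows "rc 1 (\<lambda>xs. case prod_decode (xs ! 0) of (a, b) \<Rightarrow> h a b)"
proof -
  define Q where "Q = (\<lambda>zs::nat list. if prod_encode (zs ! Suc 0, zs ! 0) = zs ! 2 then h (zs ! Suc 0) (zs ! 0) else 0)"
  have Q: "rc (Suc (Suc (Suc 0))) Q" unfolding Q_def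
    by (intro rc_if dec_eq rc_pe rc_proj h[simplified numeral_3_eq_3 One_nat_def] rc_const; simp)
  have Q2: "rc (Suc (Suc 0)) (\<lambda>ys. \<Sum>i<Suc (ys ! 1). Q (i # ys))"
    by (rule rc_sum[OF Q]) (intro rc_succ rc_proj; simp)
  have "rc (Suc 0) (\<lambda>xs. \<Sum>i<Suc (xs ! 0). (\<lambda>ys. \<Sum>i<Suc (ys ! 1). Q (i # ys)) (i # xs))"
    by (rule rc_sum[OF Q2]) (intro rc_succ rc_proj; simp)
  then have "rc 1 (\<lambda>xs. \<Sum>i<Suc (xs ! 0). (\<lambda>ys. \<Sum>i<Suc (ys ! 1). Q (i # ys)) (i # xs))" by simp
  then show ?thesis
  proof (rule rc_cong)
    fix xs :: "nat list" assume "length xs = 1"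
    show "(\<Sum>i<Suc (xs ! 0). (\<lambda>ys. \<Sum>i<Suc (ys ! 1). Q (i # ys)) (i # xs)) = (case prod_decode (xs ! 0) of (a, b) \<Rightarrow> h a b)"
      unfolding Q_def using decode_sum[of "xs ! 0" h] by (simp del: sum.lessThan_Suc cong: if_cong)
  qed
qed

definition dfst :: "nat \<Rightarrow> nat" where "dfst x = fst (prod_decode x)"
definition dsnd :: "nat \<Rightarrow> nat" where "dsnd x = snd (prod_decode x)"

lemma dfst_pe[simp]: "dfst (prod_encode (a, b)) = a" by (simp add: dfst_def)
lemma dsnd_pe[simp]: "dsnd (prod_encode (a, b)) = b" by (simp add: dsnd_def)
lemma pe_dfst_dsnd[simp]: "prod_encode (dfst x, dsnd x) = x" by (simp add: dfst_def dsnd_def)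

lemma rc_dfst: "rc n f \<Longrightarrow> rc n (\<lambda>xs. dfst (f xs))"
proof -
  assume f: "rc n f"
  have "rc 1 (\<lambda>xs. case prod_decode (xs ! 0) of (a, b) \<Rightarrow> a)"
    by (rule rc_decode_gen) (rule rc_proj, simp)
  then have "rc 1 (\<lambda>xs. dfst (xs ! 0))" by (rule rc_cong) (simp add: dfst_def split: prod.split)
  from rc_unary[OF this f] show ?thesis .
qed

lemma rc_dsnd: "rc n f \<Longrightarrow> rc n (\<lambda>xs. dsnd (f xs))"
proof -
  assume f: "rc n f"
  have "rc 1 (\<lambda>xs. case prod_decode (xs ! 0) of (a, b) \<Rightarrow> b)"
    by (rule rc_decode_gen) (rule rc_proj, simp)
  then have "rc 1 (\<lambda>xs. dsnd (xs ! 0))" by (rule rc_cong) (simp add: dsnd_def split: prod.split)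
  from rc_unary[OF this f] show ?thesis .
qed

lemma rc_mod2: "rc n f \<Longrightarrow> rc n (\<lambda>xs. f xs mod 2)"
proof -
  assume f: "rc n f"
  have "rc n (\<lambda>xs. rec_nat 0 (\<lambda>y r. (\<lambda>zs. 1 - zs ! 1) (y # r # xs)) (f xs))"
    by (rule rc_rec[OF rc_const _ f]) (intro rc_sub rc_const rc_proj; simp)
  moreover have "rec_nat 0 (\<lambda>y r. Suc 0 - r) k = k mod 2" for k :: nat
    by (induction k) (auto simp: mod_Suc)
  ultimately show ?thesis by (auto elim: rc_cong)
qed

lemma rc_div2: "rc n f \<Longrightarrow> rc n (\<lambda>xs. f xs div 2)"
proof -
  assume f: "rc n f"
  have "rc n (\<lambda>xs. rec_nat 0 (\<lambda>y r. (\<lambda>zs. zs ! 1 + zs ! 0 mod 2) (y # r # xs)) (f xs))"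
    by (rule rc_rec[OF rc_const _ f]) (intro rc_add rc_mod2 rc_proj; simp)
  moreover have "rec_nat 0 (\<lambda>y r. r + y mod 2) k = k div 2" for k :: nat
    by (induction k) (auto simp: div_Suc mod_Suc)
  ultimately show ?thesis by (auto elim: rc_cong)
qed

lemma rc_iter:
  assumes h: "rc 1 (\<lambda>xs. h (xs ! 0))" and a: "rc n a" and k: "rc n k"
  shows "rc n (\<lambda>xs. (h ^^ k xs) (a xs))"
proof -
  have "rc n (\<lambda>xs. rec_nat (a xs) (\<lambda>y r. (\<lambda>zs. h (zs ! 1)) (y # r # xs)) (k xs))"
    by (rule rc_rec[OF a _ k]) (rule rc_unary[OF h], rule rc_proj, simp)
  moreover have "rec_nat c (\<lambda>y r. h r) j = (h ^^ j) c" for c j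
    by (induction j) auto
  ultimately show ?thesis by (auto elim: rc_cong)
qed

lemma rc_recfn_ex: "rc n f \<Longrightarrow> \<exists>g. recfn n g \<and> (\<forall>xs. length xs = n \<longrightarrow> g xs = f xs)"
  unfolding rc_def .

lemma ce_rel_intro:
  assumes R: "dec 3 (\<lambda>zs. R (zs ! 0) (zs ! 1) (zs ! 2))"
  shows "ce_rel {(a, b). \<exists>t. R t a b}"
proof (cases "{(a, b). \<exists>t. R t a b} = {}")
  case True then show ?thesis unfolding ce_rel_def ce_set_def by simp
next
  case False
  then obtain a0 b0 t0 where R0: "R t0 a0 b0" by auto
  define F where "F = (\<lambda>xs::nat list. if R (dfst (xs ! 0)) (dfst (dsnd (xs ! 0))) (dsnd (dsnd (xs ! 0)))
      then prod_encode (dfst (dsnd (xs ! 0)), dsnd (dsnd (xs ! 0))) else prod_encode (a0, b0))"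
  have "dec 1 (\<lambda>xs. (\<lambda>zs. R (zs ! 0) (zs ! 1) (zs ! 2)) [dfst (xs ! 0), dfst (dsnd (xs ! 0)), dsnd (dsnd (xs ! 0))])"
    unfolding dec_def
    by (rule rc_comp3[OF R[unfolded dec_def]]) (intro rc_dfst rc_dsnd rc_proj; simp)+
  then have "dec 1 (\<lambda>xs. R (dfst (xs ! 0)) (dfst (dsnd (xs ! 0))) (dsnd (dsnd (xs ! 0))))"
    by (simp add: numeral_2_eq_2)
  then have "rc 1 F" unfolding F_def
    by (intro rc_if rc_pe rc_dfst rc_dsnd rc_proj rc_const; simp)
  then obtain f where f: "recfn 1 f" "\<forall>xs. length xs = 1 \<longrightarrow> f xs = F xs"
    using rc_recfn_ex by blast
  have "prod_encode ` {(a, b). \<exists>t. R t a b} = range (\<lambda>x. f [x])"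
  proof safe
    fix a b t assume "R t a b"
    then have "f [prod_encode (t, prod_encode (a, b))] = prod_encode (a, b)"
      using f(2) by (simp add: F_def)
    then show "prod_encode (a, b) \<in> range (\<lambda>x. f [x])" by (metis rangeI)
  next
    fix x
    show "f [x] \<in> prod_encode ` {(a, b). \<exists>t. R t a b}"
    proof (cases "R (dfst x) (dfst (dsnd x)) (dsnd (dsnd x))")
      case True
      have "f [x] = prod_encode (dfst (dsnd x), dsnd (dsnd x))"
        using f(2) True by (simp add: F_def del: pe_dfst_dsnd)
      then show ?thesis using True by blast
    next
      case False
      then show ?thesis using f(2) R0 by (auto simp: F_def)
    qed
  qed
  then show ?thesis unfolding ce_rel_def ce_set_def using f(1) by blast
qed

lemma ce_rel_elim:
  assumes "ce_rel W"
  shows "\<exists>R. dec 3 (\<lambda>zs. R (zs ! 0) (zs ! 1) (zs ! 2)) \<and> W = {(a, b). \<exists>t. R t a b}"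
proof (cases "W = {}")
  case True
  then show ?thesis by (intro exI[of _ "\<lambda>_ _ _. False"]) (auto intro: dec_const)
next
  case False
  then obtain f where f: "recfn 1 f" "prod_encode ` W = range (\<lambda>x. f [x])"
    using assms unfolding ce_rel_def ce_set_def by auto
  have "rc 1 f" using f(1) by (rule rc_recfn)
  have "dec 3 (\<lambda>zs. f [zs ! 0] = prod_encode (zs ! 1, zs ! 2))"
    by (intro dec_eq rc_comp1[OF \<open>rc 1 f\<close>] rc_pe rc_proj; simp)
  moreover have "W = {(a, b). \<exists>t. f [t] = prod_encode (a, b)}"
  proof safe
    fix a b assume "(a, b) \<in> W"
    then have "prod_encode (a, b) \<in> range (\<lambda>x. f [x])" using f(2) by blast
    then show "\<exists>t. f [t] = prod_encode (a, b)" by auto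
  next
    fix a b t assume "f [t] = prod_encode (a, b)"
    then have "prod_encode (a, b) \<in> prod_encode ` W" using f(2) by (metis rangeI)
    then show "(a, b) \<in> W" by (auto simp: inj_on_eq_iff[OF inj_prod_encode])
  qed
  ultimately show ?thesis by (intro exI[of _ "\<lambda>t a b. f [t] = prod_encode (a, b)"]) simp
qed

lemma ce_rel_dec:
  assumes "dec 2 (\<lambda>zs. (zs ! 0, zs ! 1) \<in> W)"
  shows "ce_rel W"
proof -
  have "dec 3 (\<lambda>xs. (\<lambda>zs. (zs ! 0, zs ! 1) \<in> W) [xs ! 1, xs ! 2])"
    unfolding dec_def by (rule rc_comp2[OF assms[unfolded dec_def]]) (rule rc_proj, simp)+
  then have "dec 3 (\<lambda>zs. (\<lambda>t a b. (a, b) \<in> W) (zs ! 0) (zs ! 1) (zs ! 2))"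
    by (rule dec_cong) simp
  from ce_rel_intro[OF this] show ?thesis by simp
qed

lemma computable_set_intro:
  assumes "dec 1 (\<lambda>zs. zs ! 0 \<in> S)"
  shows "computable_set S"
proof -
  obtain f where "recfn 1 f" "\<forall>xs. length xs = 1 \<longrightarrow> f xs = (if xs ! 0 \<in> S then 1 else 0)"
    using assms unfolding dec_def rc_def by blast
  then show ?thesis unfolding computable_set_def by (intro exI[of _ f]) auto
qed

lemma computable_rel_intro:
  assumes "dec 2 (\<lambda>zs. (zs ! 0, zs ! 1) \<in> r)"
  shows "computable_rel r"
proof -
  have "dec 1 (\<lambda>xs. (\<lambda>zs. (zs ! 0, zs ! 1) \<in> r) [dfst (xs ! 0), dsnd (xs ! 0)])"
    unfolding dec_def by (rule rc_comp2[OF assms[unfolded dec_def]]) (intro rc_dfst rc_dsnd rc_proj; simp)+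
  then have "dec 1 (\<lambda>xs. xs ! 0 \<in> prod_encode ` r)"
  proof (rule dec_cong)
    fix xs :: "nat list"
    have "(xs ! 0 \<in> prod_encode ` r) \<longleftrightarrow> prod_encode (dfst (xs ! 0), dsnd (xs ! 0)) \<in> prod_encode ` r" by simp
    also have "\<dots> \<longleftrightarrow> (dfst (xs ! 0), dsnd (xs ! 0)) \<in> r" by (rule inj_image_mem_iff[OF inj_prod_encode])
    finally show "(\<lambda>zs. (zs ! 0, zs ! 1) \<in> r) [dfst (xs ! 0), dsnd (xs ! 0)] = (xs ! 0 \<in> prod_encode ` r)" by simp
  qed
  then show ?thesis unfolding computable_rel_def by (rule computable_set_intro)
qed

lemma dec_comp1: "dec 1 (\<lambda>zs. R (zs ! 0)) \<Longrightarrow> rc n a \<Longrightarrow> dec n (\<lambda>xs. R (a xs))"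
  unfolding dec_def using rc_comp1[of "\<lambda>zs. if R (zs ! 0) then 1 else 0" n a] by simp

lemma dec_comp2: "dec 2 (\<lambda>zs. R (zs ! 0) (zs ! 1)) \<Longrightarrow> rc n a \<Longrightarrow> rc n b \<Longrightarrow> dec n (\<lambda>xs. R (a xs) (b xs))"
  unfolding dec_def using rc_comp2[of "\<lambda>zs. if R (zs ! 0) (zs ! 1) then 1 else 0" n a b] by simp

lemma dec_comp3: "dec 3 (\<lambda>zs. R (zs ! 0) (zs ! 1) (zs ! 2)) \<Longrightarrow> rc n a \<Longrightarrow> rc n b \<Longrightarrow> rc n c \<Longrightarrow> dec n (\<lambda>xs. R (a xs) (b xs) (c xs))"
  unfolding dec_def using rc_comp3[of "\<lambda>zs. if R (zs ! 0) (zs ! 1) (zs ! 2) then 1 else 0" n a b c] by (simp add: numeral_2_eq_2)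

lemma dec_computable_set: "computable_set S \<Longrightarrow> dec 1 (\<lambda>zs. zs ! 0 \<in> S)"
  unfolding computable_set_def dec_def
proof (elim exE conjE)
  fix f assume f: "recfn 1 f" "\<forall>x. f [x] = (if x \<in> S then 1 else 0)"
  show "rc 1 (\<lambda>zs. if zs ! 0 \<in> S then 1 else 0)"
    by (rule rc_cong[OF rc_recfn[OF f(1)]]) (use f(2) in \<open>auto simp: length_Suc_conv\<close>)
qed

lemma dec_computable_rel: "computable_rel r \<Longrightarrow> dec 2 (\<lambda>zs. (zs ! 0, zs ! 1) \<in> r)"
proof -
  assume "computable_rel r"
  then have "dec 1 (\<lambda>zs. zs ! 0 \<in> prod_encode ` r)" unfolding computable_rel_def by (rule dec_computable_set)
  from dec_comp1[OF this rc_pe[OF rc_proj rc_proj]]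
  have "dec 2 (\<lambda>xs. prod_encode (xs ! 0, xs ! 1) \<in> prod_encode ` r)" by simp
  then show ?thesis by (rule dec_cong) (rule inj_image_mem_iff[OF inj_prod_encode])
qed


lemma unif_intro:
  assumes "dec 3 (\<lambda>zs. R (zs ! 0) (zs ! 1) (zs ! 2))"
    and "\<And>n. X n = (\<Union>i\<in>{i. \<exists>t. R t n i}. Ob i)"
  shows "unif_Sigma01 Ob X"
  unfolding unif_Sigma01_def
  by (rule exI[of _ "{(a, b). \<exists>t. R t a b}"]) (use ce_rel_intro[OF assms(1)] assms(2) in simp)

lemma unif_elim:
  assumes "unif_Sigma01 Ob X"
  obtains R where "dec 3 (\<lambda>zs. R (zs ! 0) (zs ! 1) (zs ! 2))"
    and "\<And>n. X n = (\<Union>i\<in>{i. \<exists>t. R t n i}. Ob i)"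
proof -
  obtain W where W: "ce_rel W" "\<forall>n. X n = (\<Union>i\<in>{i. (n, i) \<in> W}. Ob i)"
    using assms unfolding unif_Sigma01_def by blast
  obtain R where R: "dec 3 (\<lambda>zs. R (zs ! 0) (zs ! 1) (zs ! 2))" "W = {(a, b). \<exists>t. R t a b}"
    using ce_rel_elim[OF W(1)] by blast
  show ?thesis by (rule that[OF R(1)]) (use W(2) R(2) in simp)
qed

lemma basis_cover: "topological_basis (range Ob) \<Longrightarrow> (\<Union>i. Ob i) = UNIV"
proof -
  assume B: "topological_basis (range Ob)"
  obtain B' where B': "B' \<subseteq> range Ob" "\<Union>B' = UNIV"
    using B unfolding topological_basis_def by (meson open_UNIV)
  show ?thesis
  proof (rule set_eqI)
    fix x
    have "x \<in> \<Union>B'" using B'(2) by simp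
    then obtain b where "b \<in> B'" "x \<in> b" by blast
    then show "x \<in> (\<Union>i. Ob i) \<longleftrightarrow> x \<in> UNIV" using B'(1) by blast
  qed
qed

lemma dec_N: "N = UNIV \<or> (\<exists>k. N = {..<k}) \<Longrightarrow> dec 1 (\<lambda>zs. zs ! 0 \<in> N)"
proof (elim disjE exE)
  assume "N = UNIV" then show ?thesis by (simp add: dec_const)
next
  fix k assume "N = {..<k}"
  then show ?thesis using dec_less[OF rc_proj rc_const, of 0 1 k] by simp
qed

lemma Dalpha_Delta02:
  assumes B: "topological_basis (range Ob)" and A: "A \<in> Dalpha Ob alpha"
  shows "A \<in> Delta02 Ob"
proof -
  obtain r N phi X where N: "N = UNIV \<or> (\<exists>k. N = {..<k})" and wo: "Well_order r"
    and F: "Field r = N" and rcomp: "computable_rel r" and iso: "iso r alpha phi"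
    and Pc: "computable_set {n \<in> N. parity_differs alpha (phi n)}"
    and X: "unif_Sigma01 Ob X"
    and Aeq: "A = (\<Union>p\<in>{p \<in> N. parity_differs alpha (phi p)}.
             X p - (\<Union>q\<in>{q \<in> N. (phi q, phi p) \<in> alpha \<and> phi q \<noteq> phi p}. X q))"
    using A unfolding Dalpha_def by blast
  define P where "P = {n \<in> N. parity_differs alpha (phi n)}"
  define Y where "Y p = (\<Union>q\<in>{q. (q, p) \<in> r \<and> q \<noteq> p}. X q)" for p
  have rel: "(phi q, phi p) \<in> alpha \<and> phi q \<noteq> phi p \<longleftrightarrow> (q, p) \<in> r \<and> q \<noteq> p" if "q \<in> N" "p \<in> N" for p q
    using iso that F unfolding iso_iff2 bij_betw_def inj_on_def by blast
  have PN: "P \<subseteq> N" unfolding P_def by auto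
  have Aeq2: "A = (\<Union>p\<in>P. X p - Y p)"
  proof -
    have "(\<Union>q\<in>{q \<in> N. (phi q, phi p) \<in> alpha \<and> phi q \<noteq> phi p}. X q) = Y p" if "p \<in> N" for p
    proof -
      have "{q \<in> N. (phi q, phi p) \<in> alpha \<and> phi q \<noteq> phi p} = {q. (q, p) \<in> r \<and> q \<noteq> p}"
        using rel[OF _ that] F by (auto simp: Field_def)
      then show ?thesis unfolding Y_def by simp
    qed
    then show ?thesis unfolding Aeq P_def by auto
  qed
  have dP: "dec 1 (\<lambda>zs. zs ! 0 \<in> P)" unfolding P_def by (rule dec_computable_set[OF Pc])
  have dN: "dec 1 (\<lambda>zs. zs ! 0 \<in> N)" by (rule dec_N[OF N])
  have dr: "dec 2 (\<lambda>zs. (zs ! 0, zs ! 1) \<in> r)" by (rule dec_computable_rel[OF rcomp])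
  obtain R where R: "dec 3 (\<lambda>zs. R (zs ! 0) (zs ! 1) (zs ! 2))"
    and XR: "\<And>n. X n = (\<Union>i\<in>{i. \<exists>t. R t n i}. Ob i)"
    by (rule unif_elim[OF X]) (rule that; assumption)
  have rN: "(q, p) \<in> r \<Longrightarrow> q \<in> N" for q p using F unfolding Field_def by blast
  define RY where "RY t p i = ((dfst t, p) \<in> r \<and> dfst t \<noteq> p \<and> R (dsnd t) (dfst t) i)" for t p i
  have dRY: "dec 3 (\<lambda>zs. RY (zs ! 0) (zs ! 1) (zs ! 2))" unfolding RY_def
    by (intro dec_conj dec_comp2[OF dr] dec_not dec_eq dec_comp3[OF R] rc_dfst rc_dsnd rc_proj; simp)
  have YR: "Y p = (\<Union>i\<in>{i. \<exists>t. RY t p i}. Ob i)" for p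
  proof -
    have "Y p = (\<Union>q\<in>{q. (q, p) \<in> r \<and> q \<noteq> p}. \<Union>i\<in>{i. \<exists>t. R t q i}. Ob i)"
      unfolding Y_def using XR by simp
    also have "\<dots> = (\<Union>i\<in>{i. \<exists>t. RY t p i}. Ob i)"
    proof safe
      fix x q i t assume "(q, p) \<in> r" "q \<noteq> p" "R t q i" "x \<in> Ob i"
      then have "RY (prod_encode (q, t)) p i" unfolding RY_def by simp
      then show "x \<in> (\<Union>i\<in>{i. \<exists>t. RY t p i}. Ob i)" using \<open>x \<in> Ob i\<close> by blast
    next
      fix x i t assume "RY t p i" "x \<in> Ob i"
      then show "x \<in> (\<Union>q\<in>{q. (q, p) \<in> r \<and> q \<noteq> p}. \<Union>i\<in>{i. \<exists>t. R t q i}. Ob i)"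
        unfolding RY_def by blast
    qed
    finally show ?thesis .
  qed
  have Yu: "unif_Sigma01 Ob Y" by (rule unif_intro[OF dRY YR])
  define X1 where "X1 p = (if p \<in> P then X p else {})" for p
  have X1u: "unif_Sigma01 Ob X1"
  proof (rule unif_intro[where R="\<lambda>t p i. p \<in> P \<and> R t p i"])
    show "dec 3 (\<lambda>zs. zs ! 1 \<in> P \<and> R (zs ! 0) (zs ! 1) (zs ! 2))"
      by (intro dec_conj dec_comp1[OF dP] dec_comp3[OF R] rc_proj; simp)
    show "X1 n = (\<Union>i\<in>{i. \<exists>t. n \<in> P \<and> R t n i}. Ob i)" for n
      unfolding X1_def using XR by auto
  qed
  have S: "A \<in> Sigma02 Ob"
    unfolding Sigma02_def
    by (rule CollectI, rule exI[of _ X1], rule exI[of _ Y]) (auto simp: X1u Yu Aeq2 X1_def split: if_splits)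
  define X2 where "X2 n = (if n = 0 then UNIV else if n - 1 \<in> N \<and> n - 1 \<notin> P then X (n - 1) else {})" for n
  define Y2 where "Y2 n = (if n = 0 then (\<Union>p\<in>N. X p) else Y (n - 1))" for n
  have X2u: "unif_Sigma01 Ob X2"
  proof (rule unif_intro[where R="\<lambda>t n i. n = 0 \<or> (n - 1 \<in> N \<and> n - 1 \<notin> P \<and> R t (n - 1) i)"])
    show "dec 3 (\<lambda>zs. zs ! 1 = 0 \<or> (zs ! 1 - 1 \<in> N \<and> zs ! 1 - 1 \<notin> P \<and> R (zs ! 0) (zs ! 1 - 1) (zs ! 2)))"
      by (intro dec_disj dec_conj dec_not dec_eq dec_comp1[OF dP] dec_comp1[OF dN] dec_comp3[OF R] rc_proj rc_const rc_sub; simp)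
    show "X2 n = (\<Union>i\<in>{i. \<exists>t. n = 0 \<or> (n - 1 \<in> N \<and> n - 1 \<notin> P \<and> R t (n - 1) i)}. Ob i)" for n
      unfolding X2_def using XR basis_cover[OF B] by auto
  qed
  define R2 where "R2 t n i = ((n = 0 \<and> dfst t \<in> N \<and> R (dsnd t) (dfst t) i) \<or> (n \<noteq> 0 \<and> RY t (n - 1) i))" for t n i
  have Y2u: "unif_Sigma01 Ob Y2"
  proof (rule unif_intro[where R=R2])
    show "dec 3 (\<lambda>zs. R2 (zs ! 0) (zs ! 1) (zs ! 2))" unfolding R2_def
      by (intro dec_disj dec_conj dec_not dec_eq dec_comp1[OF dN] dec_comp3[OF R] dec_comp3[OF dRY]
          rc_proj rc_const rc_sub rc_dfst rc_dsnd; simp)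
    show "Y2 n = (\<Union>i\<in>{i. \<exists>t. R2 t n i}. Ob i)" for n
    proof (cases "n = 0")
      case True
      have "Y2 n = (\<Union>p\<in>N. \<Union>i\<in>{i. \<exists>t. R t p i}. Ob i)" unfolding Y2_def using True XR by simp
      also have "\<dots> = (\<Union>i\<in>{i. \<exists>t. R2 t n i}. Ob i)"
      proof safe
        fix x p i t assume "p \<in> N" "R t p i" "x \<in> Ob i"
        then have "R2 (prod_encode (p, t)) n i" unfolding R2_def using True by simp
        then show "x \<in> (\<Union>i\<in>{i. \<exists>t. R2 t n i}. Ob i)" using \<open>x \<in> Ob i\<close> by blast
      next
        fix x i t assume "R2 t n i" "x \<in> Ob i"
        then show "x \<in> (\<Union>p\<in>N. \<Union>i\<in>{i. \<exists>t. R t p i}. Ob i)" unfolding R2_def using True by blast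
      qed
      finally show ?thesis .
    next
      case False
      then show ?thesis unfolding Y2_def R2_def using YR by simp
    qed
  qed
  have "- A = (\<Union>n. X2 n - Y2 n)"
  proof (intro set_eqI iffI)
    fix x assume xA: "x \<in> - A"
    show "x \<in> (\<Union>n. X2 n - Y2 n)"
    proof (cases "\<exists>p\<in>N. x \<in> X p")
      case False
      then have "x \<in> X2 0 - Y2 0" unfolding X2_def Y2_def by auto
      then show ?thesis by blast
    next
      case True
      have wf: "wf (r - Id)" using wo unfolding well_order_on_def by blast
      obtain p0 where p0: "p0 \<in> {p \<in> N. x \<in> X p}" and min: "\<And>q. (q, p0) \<in> r - Id \<Longrightarrow> q \<notin> {p \<in> N. x \<in> X p}"
        using wfE_min[OF wf, of _ "{p \<in> N. x \<in> X p}"] True by blast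
      have xY: "x \<notin> Y p0" unfolding Y_def using min rN by blast
      have "p0 \<notin> P" using xA xY p0 unfolding Aeq2 by blast
      then have "x \<in> X2 (Suc p0) - Y2 (Suc p0)" using p0 xY unfolding X2_def Y2_def by auto
      then show ?thesis by blast
    qed
  next
    fix x assume "x \<in> (\<Union>n. X2 n - Y2 n)"
    then obtain n where n: "x \<in> X2 n" "x \<notin> Y2 n" by blast
    show "x \<in> - A"
    proof
      assume "x \<in> A"
      then obtain p where p: "p \<in> P" "x \<in> X p" "x \<notin> Y p" unfolding Aeq2 by blast
      show False
      proof (cases "n = 0")
        case True then show False using n p PN unfolding Y2_def by auto
      next
        case False
        define m where "m = n - 1"
        have m: "m \<in> N" "m \<notin> P" "x \<in> X m" "x \<notin> Y m" using n False unfolding X2_def Y2_def m_def by (auto split: if_splits)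
        have "m \<noteq> p" using m p by auto
        have "(m, p) \<in> r \<or> (p, m) \<in> r"
          using wo m p PN F \<open>m \<noteq> p\<close> unfolding well_order_on_def linear_order_on_def total_on_def by blast
        then show False using m p \<open>m \<noteq> p\<close> unfolding Y_def by blast
      qed
    qed
  qed
  then have "- A \<in> Sigma02 Ob" unfolding Sigma02_def using X2u Y2u by blast
  then show ?thesis using S unfolding Delta02_def Pi02_def by blast
qed

lemma Dunion_Delta02:
  assumes "topological_basis (range Ob)"
  shows "Dunion Ob \<subseteq> Delta02 Ob"
  unfolding Dunion_def using Dalpha_Delta02[OF assms] by blast


section \<open>Kleene-Brouwer order on lists\<close>

definition kbl :: "nat list \<Rightarrow> nat list \<Rightarrow> bool" where
  "kbl s t \<longleftrightarrow> (length t < length s \<and> (\<forall>k<length t. s ! k = t ! k)) \<or>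
     (\<exists>i<min (length s) (length t). (\<forall>k<i. s ! k = t ! k) \<and> s ! i < t ! i)"

definition xl :: "nat list \<Rightarrow> nat \<Rightarrow> enat" where
  "xl s k = (if k < length s then enat (s ! k) else \<infinity>)"

definition lexs :: "(nat \<Rightarrow> enat) \<Rightarrow> (nat \<Rightarrow> enat) \<Rightarrow> bool" where
  "lexs f g \<longleftrightarrow> (\<exists>i. (\<forall>k<i. f k = g k) \<and> f i < g i)"

lemma kbl_lexs: "kbl s t \<longleftrightarrow> lexs (xl s) (xl t)"
proof
  assume "kbl s t"
  then show "lexs (xl s) (xl t)"
    unfolding kbl_def
  proof (elim disjE exE conjE)
    assume "length t < length s" "\<forall>k<length t. s ! k = t ! k"
    then show ?thesis unfolding lexs_def xl_def by (intro exI[of _ "length t"]) auto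
  next
    fix i assume "i < min (length s) (length t)" "\<forall>k<i. s ! k = t ! k" "s ! i < t ! i"
    then show ?thesis unfolding lexs_def xl_def by (intro exI[of _ i]) auto
  qed
next
  assume "lexs (xl s) (xl t)"
  then obtain i where eq: "\<forall>k<i. xl s k = xl t k" and lt: "xl s i < xl t i" unfolding lexs_def by blast
  have ils: "i < length s" using lt unfolding xl_def by (auto split: if_splits)
  show "kbl s t"
  proof (cases "i < length t")
    case True
    then have "i < min (length s) (length t)" "\<forall>k<i. s ! k = t ! k" "s ! i < t ! i"
      using ils eq lt unfolding xl_def by auto
    then show ?thesis unfolding kbl_def by blast
  next
    case False
    then have "length t < length s" "\<forall>k<length t. s ! k = t ! k"
      using ils eq unfolding xl_def by (auto split: if_splits)
    then show ?thesis unfolding kbl_def by blast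
  qed
qed

lemma lexs_irrefl: "\<not> lexs f f"
  unfolding lexs_def by auto

lemma lexs_trans: "lexs f g \<Longrightarrow> lexs g h \<Longrightarrow> lexs f h"
proof -
  assume "lexs f g" "lexs g h"
  then obtain i j where i: "\<forall>k<i. f k = g k" "f i < g i" and j: "\<forall>k<j. g k = h k" "g j < h j"
    unfolding lexs_def by blast
  show "lexs f h" unfolding lexs_def
  proof (cases i j rule: linorder_cases)
    case less then show "\<exists>i. (\<forall>k<i. f k = h k) \<and> f i < h i" using i j by (intro exI[of _ i]) auto
  next
    case equal then show "\<exists>i. (\<forall>k<i. f k = h k) \<and> f i < h i" using i j by (intro exI[of _ i]) auto
  next
    case greater then show "\<exists>i. (\<forall>k<i. f k = h k) \<and> f i < h i" using i j by (intro exI[of _ j]) auto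
  qed
qed

lemma lexs_total: "f \<noteq> g \<Longrightarrow> lexs f g \<or> lexs g f"
proof -
  assume "f \<noteq> g"
  then obtain k where "f k \<noteq> g k" by auto
  define i where "i = (LEAST k. f k \<noteq> g k)"
  have ne: "f i \<noteq> g i" unfolding i_def by (rule LeastI[of _ k]) fact
  have eq: "\<forall>k<i. f k = g k" unfolding i_def using not_less_Least by blast
  show ?thesis unfolding lexs_def
  proof (cases "f i < g i")
    case True then show "(\<exists>i. (\<forall>k<i. f k = g k) \<and> f i < g i) \<or> (\<exists>i. (\<forall>k<i. g k = f k) \<and> g i < f i)"
      using eq by blast
  next
    case False then have "g i < f i" using ne by auto
    then show "(\<exists>i. (\<forall>k<i. f k = g k) \<and> f i < g i) \<or> (\<exists>i. (\<forall>k<i. g k = f k) \<and> g i < f i)"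
      using eq by (metis)
  qed
qed

lemma xl_inj: "xl s = xl t \<Longrightarrow> s = t"
proof -
  assume e: "xl s = xl t"
  have "length s = length t"
  proof (rule ccontr)
    assume "length s \<noteq> length t"
    then consider "length s < length t" | "length t < length s" by linarith
    then show False
    proof cases
      case 1 then have "xl s (length s) \<noteq> xl t (length s)" unfolding xl_def by auto
      then show False using e by simp
    next
      case 2 then have "xl s (length t) \<noteq> xl t (length t)" unfolding xl_def by auto
      then show False using e by simp
    qed
  qed
  moreover have "s ! k = t ! k" if "k < length s" for k
    using fun_cong[OF e, of k] that \<open>length s = length t\<close> unfolding xl_def by auto
  ultimately show "s = t" by (rule nth_equalityI)
qed

lemma kbl_irrefl: "\<not> kbl s s"
  by (simp add: kbl_lexs lexs_irrefl)

lemma kbl_trans: "kbl s t \<Longrightarrow> kbl t u \<Longrightarrow> kbl s u"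
  by (simp add: kbl_lexs) (rule lexs_trans)

lemma kbl_asym: "kbl s t \<Longrightarrow> \<not> kbl t s"
  using kbl_trans kbl_irrefl by blast

lemma kbl_total: "s \<noteq> t \<Longrightarrow> kbl s t \<or> kbl t s"
  by (simp add: kbl_lexs) (metis lexs_total xl_inj)

lemma kbl_ext: "take (length s) t = s \<Longrightarrow> length s < length t \<Longrightarrow> kbl t s"
  unfolding kbl_def by (metis nth_take)

lemma kbl_branch:
  assumes "take n s = take n t" "n < length s" "n < length t" "s ! n < t ! n"
  shows "kbl s t"
  unfolding kbl_def using assms by (metis min_less_iff_conj nth_take)

section \<open>Well-foundedness of kbl on a well-founded tree\<close>

definition extrel :: "(nat list \<Rightarrow> bool) \<Rightarrow> (nat list \<times> nat list) set" where
  "extrel ch = {(t, s). ch t \<and> length t = Suc (length s) \<and> take (length s) t = s}"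

lemma kbl_wf_tree:
  assumes pref: "\<And>s n. ch s \<Longrightarrow> ch (take n s)"
    and wfe: "wf (extrel ch)"
    and ch: "ch s"
  shows "\<forall>Q. Q \<subseteq> {t. ch t \<and> take (length s) t = s} \<longrightarrow> Q \<noteq> {} \<longrightarrow> (\<exists>m\<in>Q. \<forall>q\<in>Q. \<not> kbl q m)"
  using wfe ch
proof (induction s rule: wf_induct_rule)
  case (less s)
  show ?case
  proof (intro allI impI)
    fix Q assume QS: "Q \<subseteq> {t. ch t \<and> take (length s) t = s}" and Qne: "Q \<noteq> {}"
    define Q' where "Q' = Q - {s}"
    show "\<exists>m\<in>Q. \<forall>q\<in>Q. \<not> kbl q m"
    proof (cases "Q' = {}")
      case True
      then have "Q = {s}" using Qne unfolding Q'_def by auto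
      then show ?thesis using kbl_irrefl by auto
    next
      case False
      have long: "length s < length t" if "t \<in> Q'" for t
      proof -
        have "take (length s) t = s" "t \<noteq> s" using that QS unfolding Q'_def by auto
        then show ?thesis by (metis linorder_not_le take_all)
      qed
      define a0 where "a0 = (LEAST a. \<exists>t\<in>Q'. t ! length s = a)"
      obtain t0 where "t0 \<in> Q'" using False by auto
      have a0: "\<exists>t\<in>Q'. t ! length s = a0" unfolding a0_def by (rule LeastI[of _ "t0 ! length s"]) (use \<open>t0 \<in> Q'\<close> in blast)
      have a0min: "a0 \<le> t ! length s" if "t \<in> Q'" for t unfolding a0_def by (rule Least_le) (use that in blast)
      define Q0 where "Q0 = {t\<in>Q'. t ! length s = a0}"
      obtain t1 where t1: "t1 \<in> Q0" using a0 unfolding Q0_def by blast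
      define s' where "s' = s @ [a0]"
      have t1s: "take (length s') t1 = s'"
      proof -
        have "take (length s) t1 = s" "length s < length t1" "t1 ! length s = a0"
          using t1 QS long unfolding Q0_def Q'_def by auto
        then show ?thesis unfolding s'_def by (simp add: take_Suc_conv_app_nth)
      qed
      have chs': "ch s'" using pref[of t1 "length s'"] t1s t1 QS unfolding Q0_def Q'_def by auto
      have "(s', s) \<in> extrel ch" unfolding extrel_def s'_def using chs' by (simp add: s'_def)
      moreover have Q0S: "Q0 \<subseteq> {t. ch t \<and> take (length s') t = s'}"
      proof
        fix t assume t: "t \<in> Q0"
        have "take (length s) t = s" "length s < length t" "t ! length s = a0" "ch t"
          using t QS long unfolding Q0_def Q'_def by auto
        then show "t \<in> {t. ch t \<and> take (length s') t = s'}" unfolding s'_def by (simp add: take_Suc_conv_app_nth)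
      qed
      ultimately obtain m where m: "m \<in> Q0" and mmin: "\<forall>q\<in>Q0. \<not> kbl q m"
        using less.IH[OF _ chs'] t1 by blast
      have mQ: "m \<in> Q" "m \<in> Q'" using m unfolding Q0_def Q'_def by auto
      show ?thesis
      proof (intro bexI[OF _ mQ(1)] ballI)
        fix q assume q: "q \<in> Q"
        show "\<not> kbl q m"
        proof (cases "q = s")
          case True
          have "kbl m s" using kbl_ext[of s m] mQ QS long by auto
          then show ?thesis using True kbl_asym by blast
        next
          case False
          then have q': "q \<in> Q'" using q unfolding Q'_def by auto
          show ?thesis
          proof (cases "q ! length s = a0")
            case True then show ?thesis using mmin q' unfolding Q0_def by auto
          next
            case False
            then have "m ! length s < q ! length s" using a0min[OF q'] m unfolding Q0_def by auto
            moreover have "take (length s) m = s" using mQ(1) QS by blast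
            moreover have "take (length s) q = s" using q QS by blast
            ultimately have "m ! length s < q ! length s \<and> take (length s) m = take (length s) q" by auto
            then have "kbl m q" using long[OF q'] long[OF mQ(2)] by (intro kbl_branch) auto
            then show ?thesis using kbl_asym by blast
          qed
        qed
      qed
    qed
  qed
qed

lemma kbl_wf:
  assumes pref: "\<And>s n. ch s \<Longrightarrow> ch (take n s)"
    and wfe: "wf (extrel ch)"
    and ne: "x \<in> Q" "Q \<subseteq> {t. ch t}"
  shows "\<exists>m\<in>Q. \<forall>q\<in>Q. \<not> kbl q m"
proof -
  have "ch []" using pref[of x 0] ne by auto
  from kbl_wf_tree[OF pref wfe this] ne show ?thesis by auto
qed

section \<open>Codes of lists\<close>

definition itr :: "nat \<Rightarrow> nat \<Rightarrow> nat" where "itr k c = (dsnd ^^ k) c"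
definition el :: "nat \<Rightarrow> nat \<Rightarrow> nat" where "el k c = dfst (itr k c)"
definition nl :: "nat \<Rightarrow> nat list" where "nl m = map (\<lambda>k. el k (dsnd m)) [0..<dfst m]"
definition canon :: "nat \<Rightarrow> bool" where "canon m \<longleftrightarrow> itr (dfst m) (dsnd m) = 0"

primrec encl :: "nat list \<Rightarrow> nat" where
  "encl [] = 0"
| "encl (e # s) = prod_encode (e, encl s)"

definition enc :: "nat list \<Rightarrow> nat" where "enc s = prod_encode (length s, encl s)"

lemma itr_Suc: "itr (Suc k) c = dsnd (itr k c)"
  unfolding itr_def by simp

lemma itr_Suc': "itr (Suc k) c = itr k (dsnd c)"
  unfolding itr_def by (simp add: funpow_Suc_right del: funpow.simps)

lemma length_nl[simp]: "length (nl m) = dfst m"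
  unfolding nl_def by simp

lemma nth_nl: "k < dfst m \<Longrightarrow> nl m ! k = el k (dsnd m)"
  unfolding nl_def by simp

lemma itr_0[simp]: "itr 0 c = c"
  unfolding itr_def by simp

lemma itr_encl: "k \<le> length s \<Longrightarrow> itr k (encl s) = encl (drop k s)"
proof (induction s arbitrary: k)
  case Nil then show ?case by (simp add: itr_def)
next
  case (Cons e s)
  then show ?case by (cases k) (auto simp: itr_Suc')
qed

lemma el_encl: "k < length s \<Longrightarrow> el k (encl s) = s ! k"
  unfolding el_def by (simp add: itr_encl Cons_nth_drop_Suc[symmetric])

lemma nl_enc[simp]: "nl (enc s) = s"
  unfolding nl_def enc_def by (intro nth_equalityI) (auto simp: el_encl)

lemma canon_enc: "canon (enc s)"
  unfolding canon_def enc_def by (simp add: itr_encl)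

lemma enc_nl: assumes "canon m" shows "enc (nl m) = m"
proof -
  have "encl (drop (dfst m - d) (nl m)) = itr (dfst m - d) (dsnd m)" if "d \<le> dfst m" for d
    using that
  proof (induction d)
    case 0 then show ?case using assms by (simp add: canon_def)
  next
    case (Suc d)
    define k where "k = dfst m - Suc d"
    have k: "k < dfst m" "Suc k = dfst m - d" using Suc.prems unfolding k_def by auto
    have "drop k (nl m) = nl m ! k # drop (Suc k) (nl m)" using k(1) by (simp add: Cons_nth_drop_Suc)
    then have "encl (drop k (nl m)) = prod_encode (el k (dsnd m), itr (Suc k) (dsnd m))"
      using Suc.IH Suc.prems k by (simp add: nth_nl)
    also have "\<dots> = itr k (dsnd m)" by (simp add: el_def itr_Suc)
    finally show ?case unfolding k_def .
  qed
  from this[of "dfst m"] show ?thesis unfolding enc_def by simp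
qed

lemma nl_inj: "canon m \<Longrightarrow> canon m' \<Longrightarrow> nl m = nl m' \<Longrightarrow> m = m'"
  by (metis enc_nl)

definition valid :: "(nat list \<Rightarrow> bool) \<Rightarrow> nat \<Rightarrow> bool" where
  "valid ch m \<longleftrightarrow> canon m \<and> ch (nl m)"

definition so :: "(nat list \<Rightarrow> bool) \<Rightarrow> nat \<Rightarrow> nat \<Rightarrow> bool" where
  "so ch m m' \<longleftrightarrow> (\<not> valid ch m \<and> \<not> valid ch m' \<and> m < m') \<or> (\<not> valid ch m \<and> valid ch m') \<or>
      (valid ch m \<and> valid ch m' \<and> kbl (nl m) (nl m'))"

lemma so_irrefl: "\<not> so ch m m"
  unfolding so_def using kbl_irrefl by auto

lemma so_trans: "so ch a b \<Longrightarrow> so ch b c \<Longrightarrow> so ch a c"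
  unfolding so_def using kbl_trans by auto

lemma so_total: "a \<noteq> b \<Longrightarrow> so ch a b \<or> so ch b a"
proof -
  assume ab: "a \<noteq> b"
  show ?thesis
  proof (cases "valid ch a \<and> valid ch b")
    case True
    then have "nl a \<noteq> nl b" using nl_inj ab unfolding valid_def by blast
    then show ?thesis using kbl_total True unfolding so_def by blast
  next
    case False
    then show ?thesis using ab unfolding so_def by auto
  qed
qed

lemma so_wf:
  assumes pref: "\<And>s n. ch s \<Longrightarrow> ch (take n s)" and wfe: "wf (extrel ch)"
  shows "wf {(a, b). so ch a b}"
proof (rule wfI_min)
  fix x :: nat and Q assume xQ: "x \<in> Q"
  show "\<exists>z\<in>Q. \<forall>y. (y, z) \<in> {(a, b). so ch a b} \<longrightarrow> y \<notin> Q"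
  proof (cases "\<exists>q\<in>Q. \<not> valid ch q")
    case True
    define z where "z = (LEAST q. q \<in> Q \<and> \<not> valid ch q)"
    have z: "z \<in> Q" "\<not> valid ch z" using True LeastI_ex[of "\<lambda>q. q \<in> Q \<and> \<not> valid ch q"] unfolding z_def by auto
    have "y \<notin> Q" if "so ch y z" for y
    proof
      assume "y \<in> Q"
      have "\<not> valid ch y" "y < z" using that z unfolding so_def by auto
      then show False using not_less_Least[of y "\<lambda>q. q \<in> Q \<and> \<not> valid ch q"] \<open>y \<in> Q\<close> unfolding z_def by blast
    qed
    then show ?thesis using z by blast
  next
    case False
    have "\<exists>m\<in>nl ` Q. \<forall>q\<in>nl ` Q. \<not> kbl q m"
      by (rule kbl_wf[OF pref wfe, of "nl x"]) (use xQ False in \<open>auto simp: valid_def\<close>)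
    then obtain z where z: "z \<in> Q" and zmin: "\<forall>q\<in>Q. \<not> kbl (nl q) (nl z)" by blast
    have "y \<notin> Q" if "so ch y z" for y
      using that zmin False unfolding so_def by blast
    then show ?thesis using z by blast
  qed
qed

definition dlt :: "(nat \<Rightarrow> nat \<Rightarrow> bool) \<Rightarrow> nat \<Rightarrow> nat \<Rightarrow> bool" where
  "dlt lt n n' \<longleftrightarrow> lt (n div 2) (n' div 2) \<or> (n div 2 = n' div 2 \<and> n mod 2 < n' mod 2)"

definition drel :: "(nat \<Rightarrow> nat \<Rightarrow> bool) \<Rightarrow> nat rel" where
  "drel lt = {(n, n'). n = n' \<or> dlt lt n n'}"

locale slo =
  fixes lt :: "nat \<Rightarrow> nat \<Rightarrow> bool"
  assumes irr: "\<not> lt a a" and trn: "lt a b \<Longrightarrow> lt b c \<Longrightarrow> lt a c"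
    and tot: "a \<noteq> b \<Longrightarrow> lt a b \<or> lt b a" and wfl: "wf {(a, b). lt a b}"
begin

lemma asym: "lt a b \<Longrightarrow> \<not> lt b a" using irr trn by blast

definition R where "R = {(a, b). a = b \<or> lt a b}"

lemma Field_R: "Field R = UNIV"
  unfolding R_def Field_def by auto

lemma WO: "Well_order R"
proof -
  have "R - Id = {(a, b). lt a b}" unfolding R_def using irr by auto
  then have "wf (R - Id)" using wfl by simp
  moreover have "linear_order_on UNIV R"
    unfolding linear_order_on_def partial_order_on_def preorder_on_def
  proof (intro conjI)
    show "R \<subseteq> UNIV \<times> UNIV" by simp
    show "refl_on UNIV R" unfolding refl_on_def R_def by simp
    show "trans R" unfolding trans_def R_def using trn by blast
    show "antisym R" unfolding antisym_def R_def using asym by blast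
    show "total_on UNIV R" unfolding total_on_def R_def using tot by blast
  qed
  ultimately show ?thesis unfolding well_order_on_def Field_R by simp
qed

end

lemma slo_dlt:
  assumes "slo lt" shows "slo (dlt lt)"
proof -
  interpret slo lt by fact
  show ?thesis
  proof
    show "\<not> dlt lt a a" for a unfolding dlt_def using irr by auto
    show "dlt lt a c" if ab: "dlt lt a b" and bc: "dlt lt b c" for a b c
    proof -
      consider "lt (a div 2) (b div 2)" | "a div 2 = b div 2" "a mod 2 < b mod 2" using ab unfolding dlt_def by blast
      moreover consider "lt (b div 2) (c div 2)" | "b div 2 = c div 2" "b mod 2 < c mod 2" using bc unfolding dlt_def by blast
      ultimately show ?thesis unfolding dlt_def
        by cases (cases, (metis trn less_trans)+)+
    qed
    show "dlt lt a b \<or> dlt lt b a" if "a \<noteq> b" for a b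
    proof (cases "a div 2 = b div 2")
      case True
      then have "a mod 2 \<noteq> b mod 2" using that by (metis div_mult_mod_eq)
      then show ?thesis using True unfolding dlt_def by auto
    next
      case False then show ?thesis using tot unfolding dlt_def by blast
    qed
    have "{(a, b). dlt lt a b} \<subseteq> inv_image ({(a, b). lt a b} <*lex*> less_than) (\<lambda>n. (n div 2, n mod 2))"
      unfolding dlt_def by auto
    moreover have "wf (inv_image ({(a, b). lt a b} <*lex*> less_than) (\<lambda>n. (n div 2, n mod 2)))"
      using wfl by (intro wf_inv_image wf_lex_prod) auto
    ultimately show "wf {(a, b). dlt lt a b}" by (rule wf_subset[rotated])
  qed
qed

section \<open>Parity in the doubled order\<close>

definition partner :: "nat \<Rightarrow> nat" where "partner b = (if even b then Suc b else b - 1)"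

lemma partner_div: "partner b div 2 = b div 2"
  unfolding partner_def by (cases "even b") (auto elim: evenE oddE)

lemma partner_ne: "partner b \<noteq> b"
  unfolding partner_def by (cases "even b") (auto elim: oddE)

lemma partner_partner: "partner (partner b) = b"
  unfolding partner_def by (cases "even b") (auto elim: oddE)

lemma same_half: "y div 2 = b div 2 \<Longrightarrow> y = b \<or> y = partner b"
  unfolding partner_def by (cases "even b"; cases "even y") (auto elim!: evenE oddE)

lemma card_partner_even:
  assumes cl: "\<And>b. b \<in> D \<Longrightarrow> partner b \<in> D"
  shows "even (card D)"
proof -
  define M where "M = (\<lambda>b. b div 2) ` D"
  have D: "D = {b. b div 2 \<in> M}"
  proof safe
    fix b assume "b div 2 \<in> M"
    then obtain d where d: "d \<in> D" "b div 2 = d div 2" unfolding M_def by blast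
    then show "b \<in> D" using same_half[OF d(2)] cl by auto
  qed (auto simp: M_def)
  have "bij_betw (\<lambda>(q, e). 2 * q + e) (M \<times> {0, 1}) {b. b div 2 \<in> M}"
  proof (rule bij_betwI[where g="\<lambda>b. (b div 2, b mod 2)"])
    show "(\<lambda>(q, e). 2 * q + e) \<in> M \<times> {0, 1} \<rightarrow> {b. b div 2 \<in> M}" by auto
    show "(\<lambda>b. (b div 2, b mod 2)) \<in> {b. b div 2 \<in> M} \<rightarrow> M \<times> {0, 1}" by auto
  qed auto
  then have "card {b. b div 2 \<in> M} = card (M \<times> {0::nat, 1})" by (simp add: bij_betw_same_card)
  also have "\<dots> = card M * 2" by (simp add: card_cartesian_product)
  finally show ?thesis using D by simp
qed

definition fins :: "nat rel \<Rightarrow> nat \<Rightarrow> nat set" where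
  "fins r a = {b. (b, a) \<in> r \<and> finite {x. (b, x) \<in> r \<and> (x, a) \<in> r}}"

lemma elem_finpart_fins: "elem_finpart r a = card (fins r a) - 1"
  unfolding elem_finpart_def fins_def ..

context slo
begin

abbreviation "D \<equiv> drel lt"
abbreviation "dl \<equiv> dlt lt"

lemma D_iff: "(a, b) \<in> D \<longleftrightarrow> a = b \<or> dl a b"
  unfolding drel_def by simp

lemma sloD: "slo dl" by (rule slo_dlt) (unfold_locales)

lemma D_trans: "(a, b) \<in> D \<Longrightarrow> (b, c) \<in> D \<Longrightarrow> (a, c) \<in> D"
  using slo.trn[OF sloD] unfolding D_iff by blast

lemma dl_irr: "\<not> dl a a" using slo.irr[OF sloD] .

lemma dl_asym: "dl a b \<Longrightarrow> \<not> dl b a" using slo.asym[OF sloD] .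

lemma fins_finite: "finite (fins D a)"
proof -
  have aF: "a \<in> fins D a"
  proof -
    have "{x. (a, x) \<in> D \<and> (x, a) \<in> D} = {a}" unfolding D_iff using dl_asym by auto
    then show ?thesis unfolding fins_def D_iff by simp
  qed
  obtain b0 where b0: "b0 \<in> fins D a" and min: "\<And>y. (y, b0) \<in> {(a, b). dl a b} \<Longrightarrow> y \<notin> fins D a"
    using wfE_min[OF slo.wfl[OF sloD] aF] by blast
  have "fins D a \<subseteq> {x. (b0, x) \<in> D \<and> (x, a) \<in> D}"
  proof
    fix b assume b: "b \<in> fins D a"
    then have "\<not> dl b b0" using min by blast
    then have "(b0, b) \<in> D" using slo.tot[OF sloD, of b b0] unfolding D_iff by blast
    then show "b \<in> {x. (b0, x) \<in> D \<and> (x, a) \<in> D}" using b unfolding fins_def by blast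
  qed
  moreover have "finite {x. (b0, x) \<in> D \<and> (x, a) \<in> D}" using b0 unfolding fins_def by blast
  ultimately show ?thesis by (rule finite_subset)
qed

lemma dl_even_odd: "dl (2 * m) (Suc (2 * m))"
  unfolding dlt_def by simp

lemma below_odd: "dl y (Suc (2 * m)) \<Longrightarrow> (y, 2 * m) \<in> D"
proof -
  assume "dl y (Suc (2 * m))"
  then consider "lt (y div 2) m" | "y div 2 = m" "y mod 2 < 1" unfolding dlt_def by auto
  then show ?thesis
  proof cases
    case 1 then show ?thesis unfolding D_iff dlt_def by simp
  next
    case 2 then have "y = 2 * m" by (metis div_mult_mod_eq less_one mult.commute add_0_right)
    then show ?thesis unfolding D_iff by simp
  qed
qed

lemma fins_odd: "fins D (Suc (2 * m)) = insert (Suc (2 * m)) (fins D (2 * m))"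
proof safe
  show "Suc (2 * m) \<in> fins D (Suc (2 * m))"
  proof -
    have "{x. (Suc (2 * m), x) \<in> D \<and> (x, Suc (2 * m)) \<in> D} = {Suc (2 * m)}" unfolding D_iff using dl_asym by auto
    then show ?thesis unfolding fins_def D_iff by simp
  qed
next
  fix b assume b: "b \<in> fins D (Suc (2 * m))" "b \<notin> fins D (2 * m)"
  show "b = Suc (2 * m)"
  proof (rule ccontr)
    assume ne: "b \<noteq> Suc (2 * m)"
    then have bd: "dl b (Suc (2 * m))" using b unfolding fins_def D_iff by blast
    have b2: "(b, 2 * m) \<in> D" by (rule below_odd[OF bd])
    have "{x. (b, x) \<in> D \<and> (x, 2 * m) \<in> D} \<subseteq> {x. (b, x) \<in> D \<and> (x, Suc (2 * m)) \<in> D}"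
      using D_trans[OF _ iffD2[OF D_iff, OF disjI2[OF dl_even_odd]]] by blast
    then have "finite {x. (b, x) \<in> D \<and> (x, 2 * m) \<in> D}" using b(1) unfolding fins_def by (blast intro: finite_subset)
    then show False using b b2 unfolding fins_def by blast
  qed
next
  fix b assume b: "b \<in> fins D (2 * m)"
  have b2: "(b, 2 * m) \<in> D" using b unfolding fins_def by blast
  have b3: "(b, Suc (2 * m)) \<in> D" using D_trans[OF b2] dl_even_odd unfolding D_iff by blast
  have "{x. (b, x) \<in> D \<and> (x, Suc (2 * m)) \<in> D} \<subseteq> insert (Suc (2 * m)) {x. (b, x) \<in> D \<and> (x, 2 * m) \<in> D}"
    using below_odd unfolding D_iff by blast
  moreover have "finite {x. (b, x) \<in> D \<and> (x, 2 * m) \<in> D}" using b unfolding fins_def by blast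
  ultimately have "finite {x. (b, x) \<in> D \<and> (x, Suc (2 * m)) \<in> D}" by (rule finite_subset[OF _ finite_insert[THEN iffD2]])
  then show "b \<in> fins D (Suc (2 * m))" using b3 unfolding fins_def by blast
qed

lemma odd_notin_fins: "Suc (2 * m) \<notin> fins D (2 * m)"
  unfolding fins_def D_iff using dl_asym[OF dl_even_odd] by auto

lemma fins_even_partner:
  assumes b: "b \<in> fins D (2 * m) - {2 * m}"
  shows "partner b \<in> fins D (2 * m) - {2 * m}"
proof -
  have bd: "dl b (2 * m)" using b unfolding fins_def D_iff by blast
  have bm: "b div 2 \<noteq> m"
  proof
    assume "b div 2 = m"
    then have "b = 2 * m \<or> b = Suc (2 * m)" by auto
    then show False using b odd_notin_fins by auto
  qed
  then have lbm: "lt (b div 2) m" using bd unfolding dlt_def by auto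
  define b' where "b' = partner b"
  have hb': "b' div 2 = b div 2" unfolding b'_def by (rule partner_div)
  have b'd: "dl b' (2 * m)" using lbm hb' unfolding dlt_def by simp
  have b'ne: "b' \<noteq> 2 * m" using bm hb' by auto
  have sub: "{x. (b', x) \<in> D \<and> (x, 2 * m) \<in> D} \<subseteq> insert b' {x. (b, x) \<in> D \<and> (x, 2 * m) \<in> D}"
  proof
    fix y assume y: "y \<in> {x. (b', x) \<in> D \<and> (x, 2 * m) \<in> D}"
    show "y \<in> insert b' {x. (b, x) \<in> D \<and> (x, 2 * m) \<in> D}"
    proof (cases "y = b'")
      case False
      then have "dl b' y" using y unfolding D_iff by blast
      then consider "lt (b' div 2) (y div 2)" | "b' div 2 = y div 2" unfolding dlt_def by auto
      then have "(b, y) \<in> D"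
      proof cases
        case 1 then show ?thesis using hb' unfolding D_iff dlt_def by simp
      next
        case 2 then have "y = b' \<or> y = partner b'" using same_half by metis
        then have "y = b" using False partner_partner unfolding b'_def by auto
        then show ?thesis unfolding D_iff by simp
      qed
      then show ?thesis using y by blast
    qed simp
  qed
  have "finite {x. (b, x) \<in> D \<and> (x, 2 * m) \<in> D}" using b unfolding fins_def by blast
  then have "finite {x. (b', x) \<in> D \<and> (x, 2 * m) \<in> D}" using sub by (meson finite_insert finite_subset)
  then show ?thesis using b'd b'ne unfolding fins_def D_iff b'_def by blast
qed

lemma elem_parity: "even (elem_finpart D n) \<longleftrightarrow> even n"
proof -
  obtain m where "n = 2 * m \<or> n = Suc (2 * m)" by (metis evenE oddE add.commute plus_1_eq_Suc)
  define E where "E = fins D (2 * m) - {2 * m}"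
  have Ee: "even (card E)" by (rule card_partner_even) (use fins_even_partner in \<open>simp add: E_def\<close>)
  have in2m: "2 * m \<in> fins D (2 * m)"
  proof -
    have "{x. (2 * m, x) \<in> D \<and> (x, 2 * m) \<in> D} = {2 * m}" unfolding D_iff using dl_asym by auto
    then show ?thesis unfolding fins_def D_iff by simp
  qed
  have fE: "finite E" unfolding E_def using fins_finite by simp
  have c1: "card (fins D (2 * m)) = Suc (card E)"
    using in2m fE unfolding E_def by (metis card.insert_remove finite_Diff2 fins_finite insert_absorb Diff_empty finite.emptyI card_Suc_Diff1)
  have c2: "card (fins D (Suc (2 * m))) = Suc (Suc (card E))"
    using c1 odd_notin_fins fins_finite by (simp add: fins_odd)
  show ?thesis
    using \<open>n = 2 * m \<or> n = Suc (2 * m)\<close> c1 c2 Ee unfolding elem_finpart_fins by auto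
qed

lemma type_parity: "even (type_finpart D)"
proof -
  have FD: "Field D = UNIV" unfolding Field_def drel_def by auto
  have up: "finite {x. (partner b, x) \<in> D} \<longleftrightarrow> finite {x. (b, x) \<in> D}" for b
  proof -
    have key: "{x. (2 * m, x) \<in> D} = insert (2 * m) {x. (Suc (2 * m), x) \<in> D}" for m
    proof safe
      fix x assume "(2 * m, x) \<in> D" "x \<noteq> 2 * m"
      then have "dl (2 * m) x" unfolding D_iff by blast
      then consider "lt m (x div 2)" | "x div 2 = m" "0 < x mod 2" unfolding dlt_def by auto
      then show "(Suc (2 * m), x) \<in> D"
      proof cases
        case 1 then show ?thesis unfolding D_iff dlt_def by simp
      next
        case 2 then have "x = Suc (2 * m)" by (metis div_mult_mod_eq mult.commute less_one not_less mod_less_divisor zero_less_numeral Suc_eq_plus1 le_less_Suc_eq mod2_gr_0 add.commute)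
        then show ?thesis unfolding D_iff by simp
      qed
    next
      fix x assume "(Suc (2 * m), x) \<in> D"
      then show "(2 * m, x) \<in> D" using D_trans[of "2 * m" "Suc (2 * m)" x] dl_even_odd unfolding D_iff by blast
    qed (simp add: D_iff)
    obtain m where "b = 2 * m \<or> b = Suc (2 * m)" by (metis evenE oddE add.commute plus_1_eq_Suc)
    then show ?thesis using key[of m] unfolding partner_def by auto
  qed
  show ?thesis unfolding type_finpart_def FD
    by (rule card_partner_even) (use up in simp)
qed

lemma parity_differs_D: "parity_differs D n \<longleftrightarrow> odd n"
  unfolding parity_differs_def using elem_parity type_parity by auto

end


definition lev :: "(nat \<Rightarrow> nat \<Rightarrow> nat \<Rightarrow> bool) \<Rightarrow> (nat \<Rightarrow> nat \<Rightarrow> nat \<Rightarrow> bool) \<Rightarrow> nat \<Rightarrow> nat \<Rightarrow> nat \<Rightarrow> bool" where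
  "lev RU RV k t i \<longleftrightarrow> (k mod 2 = 0 \<and> RU t (k div 2) i) \<or> (k mod 2 \<noteq> 0 \<and> RV t (k div 2) i)"

definition jj :: "nat \<Rightarrow> nat" where "jj e = dfst e"
definition wt1 :: "nat \<Rightarrow> nat" where "wt1 e = dfst (dsnd e)"
definition wt2 :: "nat \<Rightarrow> nat" where "wt2 e = dfst (dsnd (dsnd e))"
definition wi0 :: "nat \<Rightarrow> nat" where "wi0 e = dfst (dsnd (dsnd (dsnd e)))"
definition wt3 :: "nat \<Rightarrow> nat" where "wt3 e = dsnd (dsnd (dsnd (dsnd e)))"

definition mkel :: "nat \<Rightarrow> nat \<Rightarrow> nat \<Rightarrow> nat \<Rightarrow> nat \<Rightarrow> nat" where
  "mkel j t1 t2 i0 t3 = prod_encode (j, prod_encode (t1, prod_encode (t2, prod_encode (i0, t3))))"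

lemma mkel_simps[simp]: "jj (mkel j t1 t2 i0 t3) = j" "wt1 (mkel j t1 t2 i0 t3) = t1"
  "wt2 (mkel j t1 t2 i0 t3) = t2" "wi0 (mkel j t1 t2 i0 t3) = i0" "wt3 (mkel j t1 t2 i0 t3) = t3"
  by (simp_all add: mkel_def jj_def wt1_def wt2_def wi0_def wt3_def)

definition okel :: "(nat \<Rightarrow> nat \<Rightarrow> nat \<Rightarrow> bool) \<Rightarrow> (nat \<Rightarrow> nat \<Rightarrow> nat \<Rightarrow> bool) \<Rightarrow> (nat \<Rightarrow> nat \<Rightarrow> nat \<Rightarrow> bool)
   \<Rightarrow> nat \<Rightarrow> nat \<Rightarrow> nat \<Rightarrow> bool" where
  "okel RU RV RL k e prev \<longleftrightarrow> lev RU RV k (wt2 e) (wi0 e) \<and> RL (wt3 e) (wi0 e) (jj e) \<and>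
     (0 < k \<longrightarrow> RL (wt1 e) (jj prev) (jj e))"

definition chn :: "(nat \<Rightarrow> nat \<Rightarrow> nat \<Rightarrow> bool) \<Rightarrow> (nat \<Rightarrow> nat \<Rightarrow> nat \<Rightarrow> bool) \<Rightarrow> (nat \<Rightarrow> nat \<Rightarrow> nat \<Rightarrow> bool)
   \<Rightarrow> nat list \<Rightarrow> bool" where
  "chn RU RV RL s \<longleftrightarrow> (\<forall>k<length s. okel RU RV RL k (s ! k) (s ! (k - 1)))"

lemma chn_take: "chn RU RV RL s \<Longrightarrow> chn RU RV RL (take n s)"
  unfolding chn_def by auto

lemma chn_snoc: "chn RU RV RL s \<Longrightarrow> okel RU RV RL (length s) e (s ! (length s - 1)) \<Longrightarrow> chn RU RV RL (s @ [e])"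
  unfolding chn_def okel_def by (auto simp: nth_append less_Suc_eq)

locale mainctx =
  fixes Ob :: "nat \<Rightarrow> 'a::topological_space set" and ll :: "'a set \<Rightarrow> 'a set \<Rightarrow> bool"
    and RU RV RL :: "nat \<Rightarrow> nat \<Rightarrow> nat \<Rightarrow> bool" and U V :: "nat \<Rightarrow> 'a set" and A :: "'a set"
  assumes basis: "topological_basis (range Ob)"
    and ar: "approximation_relation (range Ob) ll"
    and RL: "\<And>i j. ll (Ob i) (Ob j) \<longleftrightarrow> (\<exists>t. RL t i j)"
    and U: "\<And>n. U n = (\<Union>i\<in>{i. \<exists>t. RU t n i}. Ob i)"
    and V: "\<And>n. V n = (\<Union>i\<in>{i. \<exists>t. RV t n i}. Ob i)"
    and AU: "A = (\<Inter>n. U n)" and AV: "- A = (\<Inter>n. V n)"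
begin

abbreviation "ch \<equiv> chn RU RV RL"

definition levset :: "nat \<Rightarrow> 'a set" where
  "levset k = (if k mod 2 = 0 then U (k div 2) else V (k div 2))"

definition lastset :: "nat list \<Rightarrow> 'a set" where
  "lastset s = (if s = [] then UNIV else Ob (jj (last s)))"

lemma ar1: "\<forall>U\<in>range Ob. \<forall>V\<in>range Ob. ll U V \<longrightarrow> V \<subseteq> U"
  using ar unfolding approximation_relation_def by (rule conjunct1)

lemma ar2: "\<forall>U\<in>range Ob. \<forall>V\<in>range Ob. \<forall>T\<in>range Ob. U \<subseteq> T \<and> ll U V \<longrightarrow> ll T V"
  using ar unfolding approximation_relation_def by (rule conjunct1[OF conjunct2])

lemma ar3: "\<forall>U\<in>range Ob. \<forall>x\<in>U. \<exists>W\<in>range Ob. x \<in> W \<and> ll U W"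
  using ar unfolding approximation_relation_def by (rule conjunct1[OF conjunct2[OF conjunct2]])

lemma ar4: "\<forall>S::nat \<Rightarrow> 'a set. (\<forall>i. S i \<in> range Ob) \<and> (\<forall>i. ll (S i) (S (Suc i))) \<longrightarrow> (\<Inter>i. S i) \<noteq> {}"
  using ar unfolding approximation_relation_def by (rule conjunct2[OF conjunct2[OF conjunct2]])

lemma ll_sub: "ll (Ob i) (Ob j) \<Longrightarrow> Ob j \<subseteq> Ob i"
  using ar1 by blast

lemma ll_mono: "Ob i \<subseteq> Ob k \<Longrightarrow> ll (Ob i) (Ob j) \<Longrightarrow> ll (Ob k) (Ob j)"
  using ar2 by blast

lemma ll_ex: "x \<in> Ob i \<Longrightarrow> \<exists>j. x \<in> Ob j \<and> ll (Ob i) (Ob j)"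
  using ar3 by blast

lemma ll_chain: "(\<And>k. ll (Ob (g k)) (Ob (g (Suc k)))) \<Longrightarrow> (\<Inter>k. Ob (g k)) \<noteq> {}"
proof -
  assume h: "\<And>k. ll (Ob (g k)) (Ob (g (Suc k)))"
  from ar4[rule_format, of "\<lambda>k. Ob (g k)"] h show ?thesis by auto
qed

lemma okel_sub: "okel RU RV RL k e prev \<Longrightarrow> Ob (jj e) \<subseteq> levset k"
proof -
  assume ok: "okel RU RV RL k e prev"
  then have "ll (Ob (wi0 e)) (Ob (jj e))" unfolding okel_def using RL by blast
  then have sub: "Ob (jj e) \<subseteq> Ob (wi0 e)" by (rule ll_sub)
  have "Ob (wi0 e) \<subseteq> levset k"
    using ok unfolding okel_def lev_def levset_def U V by auto
  then show ?thesis using sub by blast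
qed

lemma okel_nest: "okel RU RV RL k e prev \<Longrightarrow> 0 < k \<Longrightarrow> ll (Ob (jj prev)) (Ob (jj e))"
  unfolding okel_def using RL by blast

lemma chn_nested:
  assumes c: "ch s" and k: "k < length s" and x: "x \<in> Ob (jj (last s))"
  shows "x \<in> Ob (jj (s ! k))"
proof -
  have "x \<in> Ob (jj (s ! (length s - 1 - d)))" if "d < length s" for d
    using that
  proof (induction d)
    case 0 then show ?case using x by (simp add: last_conv_nth)
  next
    case (Suc d)
    define k' where "k' = length s - 1 - d"
    have k': "k' < length s" "0 < k'" "length s - 1 - Suc d = k' - 1" using Suc.prems unfolding k'_def by auto
    have "okel RU RV RL k' (s ! k') (s ! (k' - 1))" using c k' unfolding chn_def by blast
    then have "Ob (jj (s ! k')) \<subseteq> Ob (jj (s ! (k' - 1)))" using okel_nest ll_sub k' by blast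
    then show ?case using Suc.IH Suc.prems k' unfolding k'_def by auto
  qed
  from this[of "length s - 1 - k"] k show ?thesis by simp
qed

lemma chn_levels:
  assumes c: "ch s" and x: "x \<in> lastset s" and k: "k < length s"
  shows "x \<in> levset k"
proof -
  have "s \<noteq> []" using k by auto
  then have "x \<in> Ob (jj (s ! k))" using chn_nested[OF c k] x unfolding lastset_def by simp
  moreover have "okel RU RV RL k (s ! k) (s ! (k - 1))" using c k unfolding chn_def by blast
  ultimately show ?thesis using okel_sub by blast
qed

lemma Ob_open: "open (Ob i)"
  using basis topological_basis_open(1) by blast

lemma child:
  assumes c: "ch s" and x: "x \<in> lastset s" and xl: "x \<in> levset (length s)"
  shows "\<exists>e. ch (s @ [e]) \<and> x \<in> Ob (jj e)"
proof -
  define k where "k = length s"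
  obtain t2 i0 where lv: "lev RU RV k t2 i0" and xi0: "x \<in> Ob i0"
    using xl unfolding levset_def lev_def U V k_def by (auto split: if_splits)
  have "open (lastset s \<inter> Ob i0)" unfolding lastset_def using Ob_open by auto
  then obtain b where "b \<in> range Ob" "x \<in> b" "b \<subseteq> lastset s \<inter> Ob i0"
    using topological_basisE[OF basis] x xi0 by (metis IntI)
  then obtain i where i: "x \<in> Ob i" "Ob i \<subseteq> lastset s" "Ob i \<subseteq> Ob i0" by blast
  obtain j where j: "x \<in> Ob j" "ll (Ob i) (Ob j)" using ll_ex[OF i(1)] by blast
  have "ll (Ob i0) (Ob j)" using ll_mono[OF i(3) j(2)] .
  then obtain t3 where t3: "RL t3 i0 j" using RL by blast
  obtain t1 where t1: "0 < k \<Longrightarrow> RL t1 (jj (s ! (k - 1))) j"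
  proof (cases "0 < k")
    case True
    then have "s \<noteq> []" unfolding k_def by auto
    then have "lastset s = Ob (jj (s ! (k - 1)))" unfolding lastset_def k_def by (simp add: last_conv_nth)
    then have "ll (Ob (jj (s ! (k - 1)))) (Ob j)" using ll_mono[OF _ j(2)] i(2) by simp
    then show ?thesis using RL that by blast
  qed auto
  define e where "e = mkel j t1 t2 i0 t3"
  have "okel RU RV RL k e (s ! (k - 1))" unfolding okel_def e_def using lv t3 t1 by simp
  then have "ch (s @ [e])" using chn_snoc[OF c] unfolding k_def by simp
  then show ?thesis using j(1) unfolding e_def by auto
qed

lemma pref: "ch s \<Longrightarrow> ch (take n s)" by (rule chn_take)

lemma wf_ext: "wf (extrel ch)"
proof (rule ccontr)
  assume "\<not> wf (extrel ch)"
  then obtain f where f: "\<And>i. (f (Suc i), f i) \<in> extrel ch" unfolding wf_iff_no_infinite_down_chain by blast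
  have lenS: "length (f (Suc i)) = Suc (length (f i))" for i using f[of i] unfolding extrel_def by simp
  have len: "length (f i) = length (f 0) + i" for i
    by (induction i) (simp_all add: lenS)
  have pfx: "take (length (f i)) (f (i + j)) = f i" for i j
  proof (induction j)
    case 0 then show ?case by simp
  next
    case (Suc j)
    have "take (length (f (i + j))) (f (Suc (i + j))) = f (i + j)" using f[of "i + j"] unfolding extrel_def by auto
    moreover have "length (f i) \<le> length (f (i + j))" using len[of i] len[of "i + j"] by linarith
    ultimately have "take (length (f i)) (f (Suc (i + j))) = take (length (f i)) (f (i + j))"
      using take_take[of "length (f i)" "length (f (i + j))" "f (Suc (i + j))"] by (simp add: min_absorb1)
    then show ?case using Suc.IH by simp
  qed
  have chf: "ch (f i)" for i
  proof -
    have "ch (f (Suc i))" "take (length (f i)) (f (Suc i)) = f i" using f[of i] unfolding extrel_def by auto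
    then show ?thesis using chn_take by metis
  qed
  define sq where "sq k = f (Suc k) ! k" for k
  have fsq: "f i ! k = sq k" if "k < length (f i)" for i k
  proof (cases "i \<le> Suc k")
    case True
    then have "take (length (f i)) (f (Suc k)) = f i" using pfx[of i "Suc k - i"] by simp
    then show ?thesis unfolding sq_def using that by (metis nth_take)
  next
    case False
    then have "take (length (f (Suc k))) (f i) = f (Suc k)" using pfx[of "Suc k" "i - Suc k"] by simp
    moreover have "k < length (f (Suc k))" using len[of "Suc k"] by linarith
    ultimately show ?thesis unfolding sq_def by (metis nth_take)
  qed
  have okk: "okel RU RV RL k (sq k) (sq (k - 1))" for k
  proof -
    have kl: "k < length (f (Suc k))" using len[of "Suc k"] by linarith
    have "okel RU RV RL k (f (Suc k) ! k) (f (Suc k) ! (k - 1))" using chf kl unfolding chn_def by blast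
    moreover have "f (Suc k) ! (k - 1) = sq (k - 1)" using fsq kl by simp
    ultimately show ?thesis unfolding sq_def by simp
  qed
  have "ll (Ob (jj (sq k))) (Ob (jj (sq (Suc k))))" for k
    using okel_nest[OF okk[of "Suc k"]] by simp
  then obtain x where x: "x \<in> (\<Inter>k. Ob (jj (sq k)))" using ll_chain[of "\<lambda>k. jj (sq k)"] by blast
  have "x \<in> levset k" for k using x okel_sub[OF okk[of k]] by blast
  then have xU: "x \<in> U n" and xV: "x \<in> V n" for n
    using levset_def[of "2 * n"] levset_def[of "Suc (2 * n)"] by auto
  have "x \<in> A" unfolding AU using xU by blast
  moreover have "x \<in> - A" unfolding AV using xV by blast
  ultimately show False by blast
qed

sublocale so: slo "so ch"
proof
  show "\<not> so ch a a" for a by (rule so_irrefl)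
  show "so ch a c" if "so ch a b" "so ch b c" for a b c using so_trans that by blast
  show "so ch a b \<or> so ch b a" if "a \<noteq> b" for a b using so_total that by blast
  show "wf {(a, b). so ch a b}" by (rule so_wf[OF pref wf_ext])
qed


sublocale dso: slo "dlt (so ch)"
  by (rule slo_dlt) (rule so.slo_axioms)

definition Xs :: "nat \<Rightarrow> 'a set" where
  "Xs n = (if valid ch (n div 2) \<and> n mod 2 = dfst (n div 2) mod 2 then lastset (nl (n div 2)) else {})"

definition dd :: "'a \<Rightarrow> nat" where "dd x = (LEAST k. x \<notin> levset k)"

lemma dd_ex: "\<exists>k. x \<notin> levset k"
proof (cases "x \<in> A")
  case True
  then have "x \<notin> (\<Inter>n. V n)" using AV by blast
  then obtain n where "x \<notin> V n" by blast
  then have "x \<notin> levset (Suc (2 * n))" unfolding levset_def by simp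
  then show ?thesis by blast
next
  case False
  then have "x \<notin> (\<Inter>n. U n)" using AU by blast
  then obtain n where "x \<notin> U n" by blast
  then have "x \<notin> levset (2 * n)" unfolding levset_def by simp
  then show ?thesis by blast
qed

lemma dd_notin: "x \<notin> levset (dd x)"
  unfolding dd_def using dd_ex by (rule LeastI_ex)

lemma below_dd: "k < dd x \<Longrightarrow> x \<in> levset k"
  unfolding dd_def using not_less_Least by blast

lemma dd_parity: "x \<in> A \<longleftrightarrow> odd (dd x)"
proof
  assume "x \<in> A"
  then have "x \<in> U n" for n using AU by blast
  then show "odd (dd x)" using dd_notin[of x] unfolding levset_def by (auto split: if_splits)
next
  assume o: "odd (dd x)"
  show "x \<in> A"
  proof (rule ccontr)
    assume "x \<notin> A"
    then have "x \<in> - A" by simp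
    then have "x \<in> V n" for n using AV by blast
    then show False using dd_notin[of x] o unfolding levset_def by (auto split: if_splits)
  qed
qed

lemma valid_root: "valid ch (enc [])"
  unfolding valid_def using canon_enc by (simp add: chn_def)

lemma dfst_enc[simp]: "dfst (enc s) = length s"
  unfolding enc_def by simp

lemma decomp:
  "A = (\<Union>p\<in>{p. odd p}. Xs p - (\<Union>q\<in>{q. (q, p) \<in> drel (so ch) \<and> q \<noteq> p}. Xs q))"
proof (intro set_eqI)
  fix x
  define Q where "Q = {p. x \<in> Xs p}"
  have root: "2 * enc [] \<in> Q" unfolding Q_def Xs_def using valid_root by (simp add: lastset_def)
  obtain p0 where p0: "p0 \<in> Q" and min: "\<And>y. (y, p0) \<in> {(a, b). dlt (so ch) a b} \<Longrightarrow> y \<notin> Q"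
    using wfE_min[OF dso.wfl root] by blast
  define m where "m = p0 div 2"
  have vm: "valid ch m" and pm: "p0 mod 2 = length (nl m) mod 2" and xm: "x \<in> lastset (nl m)"
    using p0 unfolding Q_def Xs_def m_def by (auto split: if_splits)
  have chm: "ch (nl m)" using vm unfolding valid_def by simp
  have len: "length (nl m) = dd x"
  proof (rule ccontr)
    assume ne: "length (nl m) \<noteq> dd x"
    show False
    proof (cases "dd x < length (nl m)")
      case True
      then show False using chn_levels[OF chm xm True] dd_notin by blast
    next
      case False
      then have "length (nl m) < dd x" using ne by simp
      then have "x \<in> levset (length (nl m))" by (rule below_dd)
      then obtain e where e: "ch (nl m @ [e])" "x \<in> Ob (jj e)" using child[OF chm xm] by blast
      define s' where "s' = nl m @ [e]"
      define p' where "p' = 2 * enc s' + length s' mod 2"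
      have "p' div 2 = enc s'" "p' mod 2 = length s' mod 2" unfolding p'_def by auto
      moreover have "valid ch (enc s')" unfolding valid_def using canon_enc e(1) by (simp add: s'_def)
      moreover have "lastset s' = Ob (jj e)" unfolding lastset_def s'_def by simp
      ultimately have "p' \<in> Q" unfolding Q_def Xs_def using e(2) by simp
      moreover have "dlt (so ch) p' p0"
      proof -
        have "kbl s' (nl m)" unfolding s'_def by (rule kbl_ext) auto
        then have "so ch (enc s') m" unfolding so_def using \<open>valid ch (enc s')\<close> vm by simp
        then show ?thesis unfolding dlt_def using \<open>p' div 2 = enc s'\<close> m_def by simp
      qed
      ultimately show False using min by blast
    qed
  qed
  have key: "x \<in> (\<Union>p\<in>{p. odd p}. Xs p - (\<Union>q\<in>{q. (q, p) \<in> drel (so ch) \<and> q \<noteq> p}. Xs q)) \<longleftrightarrow> odd p0"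
  proof
    assume "x \<in> (\<Union>p\<in>{p. odd p}. Xs p - (\<Union>q\<in>{q. (q, p) \<in> drel (so ch) \<and> q \<noteq> p}. Xs q))"
    then obtain p where p: "odd p" "x \<in> Xs p" and np: "\<And>q. (q, p) \<in> drel (so ch) \<Longrightarrow> q \<noteq> p \<Longrightarrow> x \<notin> Xs q" by blast
    have "p = p0"
    proof (rule ccontr)
      assume "p \<noteq> p0"
      have "\<not> dlt (so ch) p p0" using min p(2) unfolding Q_def by blast
      then have "dlt (so ch) p0 p" using dso.tot \<open>p \<noteq> p0\<close> by blast
      then have "(p0, p) \<in> drel (so ch)" unfolding drel_def by simp
      then show False using np[of p0] \<open>p \<noteq> p0\<close> p0 unfolding Q_def by blast
    qed
    then show "odd p0" using p by simp
  next
    assume o: "odd p0"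
    have "x \<notin> Xs q" if "(q, p0) \<in> drel (so ch)" "q \<noteq> p0" for q
    proof -
      have "dlt (so ch) q p0" using that unfolding drel_def by simp
      then show ?thesis using min unfolding Q_def by blast
    qed
    then show "x \<in> (\<Union>p\<in>{p. odd p}. Xs p - (\<Union>q\<in>{q. (q, p) \<in> drel (so ch) \<and> q \<noteq> p}. Xs q))"
      using o p0 unfolding Q_def by blast
  qed
  have "odd p0 \<longleftrightarrow> odd (dd x)" using pm len by (metis odd_iff_mod_2_eq_one)
  then show "x \<in> A \<longleftrightarrow> x \<in> (\<Union>p\<in>{p. odd p}. Xs p - (\<Union>q\<in>{q. (q, p) \<in> drel (so ch) \<and> q \<noteq> p}. Xs q))"
    using key dd_parity by simp
qed

end


lemma rc_itr: "rc n a \<Longrightarrow> rc n b \<Longrightarrow> rc n (\<lambda>xs. itr (a xs) (b xs))"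
  unfolding itr_def by (rule rc_iter[OF rc_dsnd[OF rc_proj]]) auto

lemma rc_el: "rc n a \<Longrightarrow> rc n b \<Longrightarrow> rc n (\<lambda>xs. el (a xs) (b xs))"
  unfolding el_def by (intro rc_dfst rc_itr)

lemma rc_jj: "rc n a \<Longrightarrow> rc n (\<lambda>xs. jj (a xs))" unfolding jj_def by (rule rc_dfst)
lemma rc_wt1: "rc n a \<Longrightarrow> rc n (\<lambda>xs. wt1 (a xs))" unfolding wt1_def by (intro rc_dfst rc_dsnd)
lemma rc_wt2: "rc n a \<Longrightarrow> rc n (\<lambda>xs. wt2 (a xs))" unfolding wt2_def by (intro rc_dfst rc_dsnd)
lemma rc_wi0: "rc n a \<Longrightarrow> rc n (\<lambda>xs. wi0 (a xs))" unfolding wi0_def by (intro rc_dfst rc_dsnd)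
lemma rc_wt3: "rc n a \<Longrightarrow> rc n (\<lambda>xs. wt3 (a xs))" unfolding wt3_def by (intro rc_dfst rc_dsnd)

lemma dec_ball2: "dec 2 Q \<Longrightarrow> rc 1 b \<Longrightarrow> dec 1 (\<lambda>xs. \<forall>i<b xs. Q (i # xs))"
  using dec_ball[of 1 Q b] by (simp add: numeral_2_eq_2)

lemma dec_ball3: "dec 3 Q \<Longrightarrow> rc 2 b \<Longrightarrow> dec 2 (\<lambda>xs. \<forall>i<b xs. Q (i # xs))"
  using dec_ball[of 2 Q b] by (simp add: numeral_3_eq_3 numeral_2_eq_2)

lemma dec_ball4: "dec 4 Q \<Longrightarrow> rc 3 b \<Longrightarrow> dec 3 (\<lambda>xs. \<forall>i<b xs. Q (i # xs))"
  using dec_ball[of 3 Q b] by (simp add: numeral_3_eq_3 eval_nat_numeral)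

lemma dec_bex3: "dec 3 Q \<Longrightarrow> rc 2 b \<Longrightarrow> dec 2 (\<lambda>xs. \<exists>i<b xs. Q (i # xs))"
  using dec_bex[of 2 Q b] by (simp add: numeral_3_eq_3 numeral_2_eq_2)

context
  fixes RU RV RL :: "nat \<Rightarrow> nat \<Rightarrow> nat \<Rightarrow> bool"
  assumes dU: "dec 3 (\<lambda>zs. RU (zs ! 0) (zs ! 1) (zs ! 2))"
    and dV: "dec 3 (\<lambda>zs. RV (zs ! 0) (zs ! 1) (zs ! 2))"
    and dL: "dec 3 (\<lambda>zs. RL (zs ! 0) (zs ! 1) (zs ! 2))"
begin

lemma dec_okel: "dec 2 (\<lambda>zs. okel RU RV RL (zs ! 0) (el (zs ! 0) (dsnd (zs ! 1))) (el (zs ! 0 - 1) (dsnd (zs ! 1))))"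
  unfolding okel_def lev_def
  by (intro dec_conj dec_disj dec_imp dec_not dec_eq dec_less dec_comp3[OF dU] dec_comp3[OF dV] dec_comp3[OF dL]
      rc_jj rc_wt1 rc_wt2 rc_wi0 rc_wt3 rc_el rc_dsnd rc_mod2 rc_div2 rc_sub rc_proj rc_const; simp)

lemma valid_el: "valid (chn RU RV RL) m \<longleftrightarrow> itr (dfst m) (dsnd m) = 0 \<and>
   (\<forall>k<dfst m. okel RU RV RL k (el k (dsnd m)) (el (k - 1) (dsnd m)))"
  unfolding valid_def canon_def chn_def by (auto simp: nth_nl)

lemma dec_valid: "dec 1 (\<lambda>zs. valid (chn RU RV RL) (zs ! 0))"
proof -
  have b: "dec 1 (\<lambda>xs. \<forall>i<dfst (xs ! 0). (\<lambda>zs. okel RU RV RL (zs ! 0) (el (zs ! 0) (dsnd (zs ! 1))) (el (zs ! 0 - 1) (dsnd (zs ! 1)))) (i # xs))"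
    by (rule dec_ball2[OF dec_okel]) (intro rc_dfst rc_proj; simp)
  have "dec 1 (\<lambda>xs. itr (dfst (xs ! 0)) (dsnd (xs ! 0)) = 0)"
    by (intro dec_eq rc_itr rc_dfst rc_dsnd rc_proj rc_const; simp)
  from dec_conj[OF this b] show ?thesis
    by (rule dec_cong) (simp add: valid_el)
qed

end

lemma kbl_el: "kbl (nl m) (nl m') \<longleftrightarrow>
   (dfst m' < dfst m \<and> (\<forall>k<dfst m'. el k (dsnd m) = el k (dsnd m'))) \<or>
   (\<exists>i<dfst m - (dfst m - dfst m'). (\<forall>k<i. el k (dsnd m) = el k (dsnd m')) \<and> el i (dsnd m) < el i (dsnd m'))"
  unfolding kbl_def by (auto simp: nth_nl min_def)

lemma dec_kbl: "dec 2 (\<lambda>zs. kbl (nl (zs ! 0)) (nl (zs ! 1)))"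
proof -
  have e4: "dec 4 (\<lambda>ys. el (ys ! 0) (dsnd (ys ! 2)) = el (ys ! 0) (dsnd (ys ! 3)))"
    by (intro dec_eq rc_el rc_dsnd rc_proj; simp)
  have e3: "dec 3 (\<lambda>xs. \<forall>k<xs ! 0. (\<lambda>ys. el (ys ! 0) (dsnd (ys ! 2)) = el (ys ! 0) (dsnd (ys ! 3))) (k # xs))"
    by (rule dec_ball4[OF e4]) (rule rc_proj, simp)
  have e3': "dec 3 (\<lambda>xs. (\<forall>k<xs ! 0. (\<lambda>ys. el (ys ! 0) (dsnd (ys ! 2)) = el (ys ! 0) (dsnd (ys ! 3))) (k # xs))
       \<and> el (xs ! 0) (dsnd (xs ! 1)) < el (xs ! 0) (dsnd (xs ! 2)))"
    by (intro dec_conj e3 dec_less rc_el rc_dsnd rc_proj; simp)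
  have part2: "dec 2 (\<lambda>zs. \<exists>i<dfst (zs ! 0) - (dfst (zs ! 0) - dfst (zs ! 1)). (\<lambda>xs. (\<forall>k<xs ! 0. (\<lambda>ys. el (ys ! 0) (dsnd (ys ! 2)) = el (ys ! 0) (dsnd (ys ! 3))) (k # xs))
       \<and> el (xs ! 0) (dsnd (xs ! 1)) < el (xs ! 0) (dsnd (xs ! 2))) (i # zs))"
    by (rule dec_bex3[OF e3']) (intro rc_sub rc_dfst rc_proj; simp)
  have e3b: "dec 3 (\<lambda>ys. el (ys ! 0) (dsnd (ys ! 1)) = el (ys ! 0) (dsnd (ys ! 2)))"
    by (intro dec_eq rc_el rc_dsnd rc_proj; simp)
  have part1: "dec 2 (\<lambda>zs. dfst (zs ! 1) < dfst (zs ! 0) \<and> (\<forall>k<dfst (zs ! 1). (\<lambda>ys. el (ys ! 0) (dsnd (ys ! 1)) = el (ys ! 0) (dsnd (ys ! 2))) (k # zs)))"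
    by (intro dec_conj dec_less rc_dfst rc_proj dec_ball3[OF e3b]; simp)
  from dec_disj[OF part1 part2] show ?thesis
    by (rule dec_cong) (simp add: kbl_el)
qed


definition Rx :: "(nat list \<Rightarrow> bool) \<Rightarrow> nat \<Rightarrow> nat \<Rightarrow> nat \<Rightarrow> bool" where
  "Rx ch t n i \<longleftrightarrow> valid ch (n div 2) \<and> n mod 2 = dfst (n div 2) mod 2 \<and>
     (dfst (n div 2) = 0 \<or> i = jj (el (dfst (n div 2) - 1) (dsnd (n div 2))))"

context mainctx
begin

lemma Xs_eq: "Xs n = (\<Union>i\<in>{i. \<exists>t. Rx ch t n i}. Ob i)"
proof (cases "valid ch (n div 2) \<and> n mod 2 = dfst (n div 2) mod 2")
  case False
  then show ?thesis unfolding Xs_def Rx_def by auto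
next
  case True
  show ?thesis
  proof (cases "dfst (n div 2) = 0")
    case z: True
    then have "nl (n div 2) = []" by (simp add: nl_def)
    then show ?thesis using True z basis_cover[OF basis] unfolding Xs_def Rx_def lastset_def by auto
  next
    case nz: False
    have ne: "nl (n div 2) \<noteq> []" using nz by (metis length_nl list.size(3))
    have "last (nl (n div 2)) = nl (n div 2) ! (length (nl (n div 2)) - 1)" by (rule last_conv_nth[OF ne])
    also have "\<dots> = el (dfst (n div 2) - 1) (dsnd (n div 2))" using nz by (simp add: nth_nl)
    finally have "nl (n div 2) \<noteq> [] \<and> last (nl (n div 2)) = el (dfst (n div 2) - 1) (dsnd (n div 2))" using ne by simp
    then show ?thesis using True nz unfolding Xs_def Rx_def lastset_def by auto
  qed
qed

lemma drel_R: "dso.R = drel (so ch)"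
  unfolding dso.R_def drel_def by simp

end

lemma dec_Rx:
  assumes dU: "dec 3 (\<lambda>zs. RU (zs ! 0) (zs ! 1) (zs ! 2))"
    and dV: "dec 3 (\<lambda>zs. RV (zs ! 0) (zs ! 1) (zs ! 2))"
    and dL: "dec 3 (\<lambda>zs. RL (zs ! 0) (zs ! 1) (zs ! 2))"
  shows "dec 3 (\<lambda>zs. Rx (chn RU RV RL) (zs ! 0) (zs ! 1) (zs ! 2))"
  unfolding Rx_def
  by (intro dec_conj dec_disj dec_eq dec_comp1[OF dec_valid[OF dU dV dL]] rc_mod2 rc_div2 rc_dfst rc_dsnd
      rc_jj rc_el rc_sub rc_proj rc_const; simp)

lemma dec_drel:
  assumes dU: "dec 3 (\<lambda>zs. RU (zs ! 0) (zs ! 1) (zs ! 2))"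
    and dV: "dec 3 (\<lambda>zs. RV (zs ! 0) (zs ! 1) (zs ! 2))"
    and dL: "dec 3 (\<lambda>zs. RL (zs ! 0) (zs ! 1) (zs ! 2))"
  shows "dec 2 (\<lambda>zs. (zs ! 0, zs ! 1) \<in> drel (so (chn RU RV RL)))"
  unfolding drel_def dlt_def so_def
  by (simp only: mem_Collect_eq case_prod_conv)
    (intro dec_conj dec_disj dec_not dec_eq dec_less dec_comp1[OF dec_valid[OF dU dV dL]] dec_comp2[OF dec_kbl]
      rc_mod2 rc_div2 rc_proj rc_const; simp)

lemma computable_odd: "computable_set {n. odd n}"
proof (rule computable_set_intro)
  have "dec 1 (\<lambda>zs. zs ! 0 mod 2 = 1)" by (intro dec_eq rc_mod2 rc_proj rc_const; simp)
  then show "dec 1 (\<lambda>zs. zs ! 0 \<in> {n. odd n})" by (rule dec_cong) (simp add: odd_iff_mod_2_eq_one)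
qed

theorem FG_Dunion:
  fixes Ob :: "nat \<Rightarrow> 'a::topological_space set"
  assumes eas: "effective_approximation_space Ob ll" and A: "A \<in> Fsigma Ob \<inter> Gdelta Ob"
  shows "A \<in> Dunion Ob"
proof -
  have basis: "topological_basis (range Ob)" and ar: "approximation_relation (range Ob) ll"
    and ce: "ce_rel {(i, j). ll (Ob i) (Ob j)}" using eas unfolding effective_approximation_space_def by auto
  obtain XU where XU: "unif_Sigma01 Ob XU" "A = (\<Inter>n. XU n)" using A unfolding Gdelta_def by blast
  obtain XV where XV: "unif_Sigma01 Ob XV" "- A = (\<Inter>n. XV n)" using A unfolding Fsigma_def Gdelta_def by blast
  obtain RU where dU: "dec 3 (\<lambda>zs. RU (zs ! 0) (zs ! 1) (zs ! 2))" and U: "\<And>n. XU n = (\<Union>i\<in>{i. \<exists>t. RU t n i}. Ob i)"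
    by (rule unif_elim[OF XU(1)]) (rule that; assumption)
  obtain RV where dV: "dec 3 (\<lambda>zs. RV (zs ! 0) (zs ! 1) (zs ! 2))" and V: "\<And>n. XV n = (\<Union>i\<in>{i. \<exists>t. RV t n i}. Ob i)"
    by (rule unif_elim[OF XV(1)]) (rule that; assumption)
  obtain RL where dL: "dec 3 (\<lambda>zs. RL (zs ! 0) (zs ! 1) (zs ! 2))" and L: "{(i, j). ll (Ob i) (Ob j)} = {(a, b). \<exists>t. RL t a b}"
    using ce_rel_elim[OF ce] by blast
  have RL: "ll (Ob i) (Ob j) \<longleftrightarrow> (\<exists>t. RL t i j)" for i j
  proof -
    have "ll (Ob i) (Ob j) \<longleftrightarrow> (i, j) \<in> {(i, j). ll (Ob i) (Ob j)}" by simp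
    also have "\<dots> \<longleftrightarrow> (\<exists>t. RL t i j)" unfolding L by simp
    finally show ?thesis .
  qed
  interpret M: mainctx Ob ll RU RV RL XU XV A
    by unfold_locales (use basis ar RL U V XU(2) XV(2) in auto)
  define alpha where "alpha = drel (so (chn RU RV RL))"
  have WO: "Well_order alpha" unfolding alpha_def using M.dso.WO M.drel_R by simp
  have FA: "Field alpha = UNIV" unfolding alpha_def using M.dso.Field_R M.drel_R by simp
  have cr: "computable_rel alpha" unfolding alpha_def by (rule computable_rel_intro[OF dec_drel[OF dU dV dL]])
  have par: "{n \<in> UNIV. parity_differs alpha (id n)} = {n. odd n}"
    unfolding alpha_def using M.so.parity_differs_D by simp
  have co: "computable_ordinal alpha"
    unfolding computable_ordinal_def using WO cr ordIso_reflexive[OF WO] by blast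
  have Xu: "unif_Sigma01 Ob M.Xs"
    by (rule unif_intro[OF dec_Rx[OF dU dV dL]]) (rule M.Xs_eq)
  have Aeq: "A = (\<Union>p\<in>{p \<in> UNIV. parity_differs alpha (id p)}.
             M.Xs p - (\<Union>q\<in>{q \<in> UNIV. (id q, id p) \<in> alpha \<and> id q \<noteq> id p}. M.Xs q))"
    using M.decomp unfolding par by (simp add: alpha_def)
  have "A \<in> Dalpha Ob alpha"
    unfolding Dalpha_def
    apply (rule CollectI)
    apply (rule exI[of _ alpha], rule exI[of _ UNIV], rule exI[of _ id], rule exI[of _ M.Xs])
    using WO FA cr id_iso[of alpha] par computable_odd Xu Aeq by simp
  moreover have "Field alpha \<noteq> {}" using FA by simp
  ultimately show ?thesis unfolding Dunion_def using co by blast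
qed

theorem theorem5p16:
  fixes Ob :: "nat \<Rightarrow> 'a::topological_space set"
    and ll :: "'a set \<Rightarrow> 'a set \<Rightarrow> bool"
  assumes "effective_approximation_space Ob ll"
  shows "Fsigma Ob \<inter> Gdelta Ob \<subseteq> Dunion Ob \<and> Dunion Ob \<subseteq> Delta02 Ob \<and>
         (Fsigma Ob \<inter> Gdelta Ob = Delta02 Ob \<longrightarrow> Dunion Ob = Delta02 Ob)"
proof -
  have 1: "Fsigma Ob \<inter> Gdelta Ob \<subseteq> Dunion Ob" using FG_Dunion[OF assms] by blast
  have 2: "Dunion Ob \<subseteq> Delta02 Ob"
    using assms Dunion_Delta02 unfolding effective_approximation_space_def by blast
  show ?thesis using 1 2 by blast
qed


end
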